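(* Let $f\in L^2(\pi)$. Then $\lambda\mapsto\langle f,P_\lambda f\rangle_\pi$, $\lambda\ge1$, is a continuous, non-negative, decreasing, convex function. Moreover: (i) for any $\lambda\ge1$, $\langle f,P_\lambda f\rangle_\pi=0$ if and only if $\|f\|_\pi=0$; (ii) $\lambda\mapsto\langle f,P_\lambda f\rangle_\pi$ is strictly decreasing if and only if $\|f-\mathbb{E}_\pi[f]\|_\pi>0$.
   Context: Let $\pi,q$ be probability densities with respect to a $\sigma$-finite measure $\mu$ on $(\mathbb{X},\mathcal{X})$ with $q(x)>0$ whenever $\pi(x)>0$; $\pi(dx)=\pi(x)\mu(dx)$, $q(dx)=q(x)\mu(dx)$, $\mathbb{S}=\{\pi>0\}$, $w(x)=\pi(x)/q(x)$ on $\mathbb{S}$ and $w=0$ elsewhere. For integer $N\ge1$ and $z_1\in\mathbb{S}$, $P_N(z_1,A)=\int_{\mathbb{X}^{N-1}}\sum_{i=1}^N\frac{w(z_i)}{\sum_{j=1}^Nw(z_j)}\mathbf 1\{z_i\in A\}\prod_{n=2}^Nq(dz_n)$, $P_1(z,\cdot)=\delta_z$. For real $\lambda\ge1$, $P_\lambda=\beta P_{\lfloor\lambda\rfloor}+(1-\beta)P_{\lfloor\lambda\rfloor+1}$ with $\beta=\lfloor\lambda\rfloor+1-\lambda$. $\langle g,h\rangle_\pi=\int gh\,d\pi$, $\|g\|_\pi=\langle g,g\rangle_\pi^{1/2}$, $P_\lambda f(x)=\int f(y)P_\lambda(x,dy)$. *)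

theory Defs
  imports "HOL-Probability.Probability"
begin

definition isw :: "('a \<Rightarrow> real) \<Rightarrow> ('a \<Rightarrow> real) \<Rightarrow> 'a \<Rightarrow> real" where
  "isw p q x = (if p x > 0 then p x / q x else 0)"

text \<open>P_N f (z1): integrate over (z_2,...,z_N) ~ q^(N-1) (product measure indexed by {2..N}),
  with z_1 := x; for N = 1 the product is the one-point measure.\<close>
definition PN :: "'a measure \<Rightarrow> ('a \<Rightarrow> real) \<Rightarrow> ('a \<Rightarrow> real) \<Rightarrow> nat \<Rightarrow> ('a \<Rightarrow> real) \<Rightarrow> 'a \<Rightarrow> real" where
  "PN M p q N f x =
     (\<integral>zs. (let z = zs(1 := x) in
              (\<Sum>i\<in>{1..N}. isw p q (z i) / (\<Sum>j\<in>{1..N}. isw p q (z j)) * f (z i)))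
       \<partial>(\<Pi>\<^sub>M i\<in>{2..N}. density M (\<lambda>y. ennreal (q y))))"

definition Plam :: "'a measure \<Rightarrow> ('a \<Rightarrow> real) \<Rightarrow> ('a \<Rightarrow> real) \<Rightarrow> real \<Rightarrow> ('a \<Rightarrow> real) \<Rightarrow> 'a \<Rightarrow> real" where
  "Plam M p q lam f x =
     (let n = nat \<lfloor>lam\<rfloor>; \<beta> = real n + 1 - lam in
        \<beta> * PN M p q n f x + (1 - \<beta>) * PN M p q (n + 1) f x)"

definition pi_inner :: "'a measure \<Rightarrow> ('a \<Rightarrow> real) \<Rightarrow> ('a \<Rightarrow> real) \<Rightarrow> ('a \<Rightarrow> real) \<Rightarrow> real" where
  "pi_inner M p g h = (\<integral>x. g x * h x \<partial>(density M (\<lambda>y. ennreal (p y))))"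

definition pi_norm :: "'a measure \<Rightarrow> ('a \<Rightarrow> real) \<Rightarrow> ('a \<Rightarrow> real) \<Rightarrow> real" where
  "pi_norm M p g = sqrt (pi_inner M p g g)"

definition pi_mean :: "'a measure \<Rightarrow> ('a \<Rightarrow> real) \<Rightarrow> ('a \<Rightarrow> real) \<Rightarrow> real" where
  "pi_mean M p g = (\<integral>x. g x \<partial>(density M (\<lambda>y. ennreal (p y))))"

end

theory Submission imports Defs begin

lemma (in pair_sigma_finite) integrable_mult_pair:
  fixes g :: "'a \<Rightarrow> real" and h :: "'b \<Rightarrow> real"
  assumes g: "integrable M1 g" and h: "integrable M2 h"
  shows "integrable (M1 \<Otimes>\<^sub>M M2) (\<lambda>z. g (fst z) * h (snd z))"
    and "(\<integral>z. g (fst z) * h (snd z) \<partial>(M1 \<Otimes>\<^sub>M M2)) = integral\<^sup>L M1 g * integral\<^sup>L M2 h"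
proof -
  have [measurable]: "g \<in> borel_measurable M1" "h \<in> borel_measurable M2" using g h by auto
  show int: "integrable (M1 \<Otimes>\<^sub>M M2) (\<lambda>z. g (fst z) * h (snd z))"
  proof (rule Fubini_integrable)
    show "(\<lambda>z. g (fst z) * h (snd z)) \<in> borel_measurable (M1 \<Otimes>\<^sub>M M2)" by measurable
    have "integrable M1 (\<lambda>x. norm (g x) * (\<integral>y. norm (h y) \<partial>M2))"
      using g by (intro integrable_mult_left) auto
    then show "integrable M1 (\<lambda>x. \<integral>y. norm (g (fst (x, y)) * h (snd (x, y))) \<partial>M2)"
      by (simp add: abs_mult)
    show "AE x in M1. integrable M2 (\<lambda>y. g (fst (x, y)) * h (snd (x, y)))"
      using h by (intro AE_I2) auto
  qed
  have "(\<integral>z. g (fst z) * h (snd z) \<partial>(M1 \<Otimes>\<^sub>M M2)) = (\<integral>x. (\<integral>y. g (fst (x, y)) * h (snd (x, y)) \<partial>M2) \<partial>M1)"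
    using integral_fst'[OF int] by simp
  also have "\<dots> = (\<integral>x. g x * integral\<^sup>L M2 h \<partial>M1)" by simp
  also have "\<dots> = integral\<^sup>L M1 g * integral\<^sup>L M2 h" by simp
  finally show "(\<integral>z. g (fst z) * h (snd z) \<partial>(M1 \<Otimes>\<^sub>M M2)) = integral\<^sup>L M1 g * integral\<^sup>L M2 h" .
qed

lemma term_bound:
  fixes a b v W S :: real
  assumes W: "0 < W" "W \<le> S" and v: "0 \<le> v" "v \<le> S"
  shows "\<bar>a\<bar> * v * \<bar>a - b\<bar> / S \<le> 3/2 * a\<^sup>2 + b\<^sup>2 * v / (2 * W)"
proof -
  have S: "S > 0" using W by simp
  have "0 \<le> (\<bar>a\<bar> - \<bar>b\<bar>)\<^sup>2" by simp
  then have "2 * (\<bar>a\<bar> * \<bar>b\<bar>) \<le> \<bar>a\<bar>\<^sup>2 + \<bar>b\<bar>\<^sup>2" unfolding power2_diff by linarith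
  then have "2 * (\<bar>a\<bar> * \<bar>b\<bar>) \<le> a\<^sup>2 + b\<^sup>2" by simp
  moreover have "\<bar>a\<bar> * \<bar>a - b\<bar> \<le> \<bar>a\<bar> * (\<bar>a\<bar> + \<bar>b\<bar>)"
    by (intro mult_left_mono) auto
  ultimately have h1: "\<bar>a\<bar> * \<bar>a - b\<bar> \<le> 3/2 * a\<^sup>2 + b\<^sup>2 / 2"
    by (simp add: algebra_simps power2_eq_square)
  have vS: "0 \<le> v / S" "v / S \<le> 1" using v S by auto
  have vSW: "v / S \<le> v / W" using v W by (intro divide_left_mono) auto
  have "\<bar>a\<bar> * v * \<bar>a - b\<bar> / S = (\<bar>a\<bar> * \<bar>a - b\<bar>) * (v / S)" by simp
  also have "\<dots> \<le> (3/2 * a\<^sup>2 + b\<^sup>2 / 2) * (v / S)" using h1 vS by (intro mult_right_mono) auto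
  also have "\<dots> = 3/2 * a\<^sup>2 * (v / S) + b\<^sup>2 / 2 * (v / S)" by (simp add: algebra_simps)
  also have "\<dots> \<le> 3/2 * a\<^sup>2 * 1 + b\<^sup>2 / 2 * (v / W)"
    using vS vSW by (intro add_mono mult_left_mono) auto
  also have "\<dots> = 3/2 * a\<^sup>2 + b\<^sup>2 * v / (2 * W)" by simp
  finally show ?thesis .
qed

lemma exp_FTC:
  fixes s T :: real assumes s: "s \<ge> 0" and T: "T \<ge> 0"
  shows "integrable lborel (\<lambda>t. indicator {0..T} t * (s * exp (- (t * s))))"
    and "(\<integral>t. indicator {0..T} t * (s * exp (- (t * s))) \<partial>lborel) = 1 - exp (- (T * s))"
proof -
  have c: "continuous_on {0..T} (\<lambda>t. s * exp (- (t * s)))" by (intro continuous_intros)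
  show "integrable lborel (\<lambda>t. indicator {0..T} t * (s * exp (- (t * s))))"
    using borel_integrable_atLeastAtMost'[OF c] by (simp add: set_integrable_def)
  have "(\<integral>t. indicator {0..T} t *\<^sub>R (s * exp (- (t * s))) \<partial>lborel) = (- exp (- (T * s))) - (- exp (- (0 * s)))"
  proof (rule integral_FTC_atLeastAtMost[OF T _ c])
    fix t assume "0 \<le> t" "t \<le> T"
    have "((\<lambda>t. - exp (- (t * s))) has_real_derivative (s * exp (- (t * s)))) (at t within {0..T})"
      by (auto intro!: derivative_eq_intros)
    then show "((\<lambda>t. - exp (- (t * s))) has_vector_derivative (s * exp (- (t * s)))) (at t within {0..T})"
      by (simp add: has_real_derivative_iff_has_vector_derivative)
  qed
  then show "(\<integral>t. indicator {0..T} t * (s * exp (- (t * s))) \<partial>lborel) = 1 - exp (- (T * s))" by simp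
qed

definition interp :: "(nat \<Rightarrow> real) \<Rightarrow> real \<Rightarrow> real" where
  "interp a lam = (let n = nat \<lfloor>lam\<rfloor>; \<beta> = real n + 1 - lam in \<beta> * a n + (1 - \<beta>) * a (n + 1))"

definition ell :: "(nat \<Rightarrow> real) \<Rightarrow> nat \<Rightarrow> real \<Rightarrow> real" where
  "ell a k lam = a k + (lam - real k) * (a (Suc k) - a k)"

lemma interp_ell: "interp a lam = ell a (nat \<lfloor>lam\<rfloor>) lam"
  unfolding interp_def ell_def Let_def by (simp add: algebra_simps)

lemma floor_props:
  assumes "lam \<ge> 1"
  shows "nat \<lfloor>lam\<rfloor> \<ge> 1" "real (nat \<lfloor>lam\<rfloor>) \<le> lam" "lam < real (nat \<lfloor>lam\<rfloor>) + 1"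
proof -
  have f1: "\<lfloor>lam\<rfloor> \<ge> 1" using assms by linarith
  then show "nat \<lfloor>lam\<rfloor> \<ge> 1" by linarith
  have "real (nat \<lfloor>lam\<rfloor>) = of_int \<lfloor>lam\<rfloor>" using f1 by simp
  then show "real (nat \<lfloor>lam\<rfloor>) \<le> lam" "lam < real (nat \<lfloor>lam\<rfloor>) + 1" by linarith+
qed

locale cvx_seq =
  fixes a :: "nat \<Rightarrow> real"
  assumes dec: "\<And>n. n \<ge> 1 \<Longrightarrow> a (Suc n) \<le> a n"
    and conv: "\<And>n. n \<ge> 1 \<Longrightarrow> a (Suc n) - a n \<le> a (Suc (Suc n)) - a (Suc n)"
begin

lemma ell_diff: "ell a (Suc k) lam - ell a k lam = (lam - real (Suc k)) * ((a (Suc (Suc k)) - a (Suc k)) - (a (Suc k) - a k))"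
  unfolding ell_def by (simp add: algebra_simps)

lemma ell_up: "k \<ge> 1 \<Longrightarrow> real (Suc k) \<le> lam \<Longrightarrow> ell a k lam \<le> ell a (Suc k) lam"
  using ell_diff[of k lam] conv[of k] by (smt (verit) mult_nonneg_nonneg)

lemma ell_down: "k \<ge> 1 \<Longrightarrow> lam \<le> real (Suc k) \<Longrightarrow> ell a (Suc k) lam \<le> ell a k lam"
  using ell_diff[of k lam] conv[of k] by (smt (verit) mult_nonpos_nonneg)

lemma ell_le:
  assumes k: "k \<ge> 1" and n: "n \<ge> 1" and lam: "real n \<le> lam" "lam \<le> real n + 1"
  shows "ell a k lam \<le> ell a n lam"
proof (cases "k \<le> n")
  case True
  show ?thesis using True
  proof (induction n rule: dec_induct)
    case base then show ?case by simp
  next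
    case (step m)
    have "ell a m lam \<le> ell a (Suc m) lam" using step k lam by (intro ell_up) auto
    then show ?case using step by simp
  qed
next
  case False
  then have "n \<le> k" by simp
  then show ?thesis
  proof (induction k rule: dec_induct)
    case base then show ?case by simp
  next
    case (step m)
    have "ell a (Suc m) lam \<le> ell a m lam" using step n lam by (intro ell_down) auto
    then show ?case using step by simp
  qed
qed

lemma ell_le_interp: "k \<ge> 1 \<Longrightarrow> lam \<ge> 1 \<Longrightarrow> ell a k lam \<le> interp a lam"
  unfolding interp_ell using floor_props[of lam] by (intro ell_le) auto

lemma interp_convex: "convex_on {1..} (interp a)"
proof (rule convex_onI)
  fix t x y :: real assume t: "0 < t" "t < 1" and xy: "x \<in> {1..}" "y \<in> {1..}"
  let ?z = "(1 - t) *\<^sub>R x + t *\<^sub>R y"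
  have "(1 - t) * 1 \<le> (1 - t) * x" "t * 1 \<le> t * y" using t xy by (intro mult_left_mono; simp)+
  then have z: "?z \<ge> 1" by simp
  let ?n = "nat \<lfloor>?z\<rfloor>"
  have n1: "?n \<ge> 1" using floor_props[OF z] by simp
  have "interp a ?z = ell a ?n ?z" by (rule interp_ell)
  also have "\<dots> = (1 - t) * ell a ?n x + t * ell a ?n y" unfolding ell_def by (simp add: algebra_simps)
  also have "\<dots> \<le> (1 - t) * interp a x + t * interp a y"
    using t xy n1 by (intro add_mono mult_left_mono ell_le_interp) auto
  finally show "interp a ?z \<le> (1 - t) * interp a x + t * interp a y" .
qed (simp add: convex_real_interval)

lemma interp_mono: "1 \<le> x \<Longrightarrow> x \<le> y \<Longrightarrow> interp a y \<le> interp a x"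
proof -
  assume xy: "1 \<le> x" "x \<le> y"
  let ?n = "nat \<lfloor>y\<rfloor>"
  have n1: "?n \<ge> 1" using floor_props[of y] xy by simp
  have "interp a y = ell a ?n y" by (rule interp_ell)
  also have "\<dots> = ell a ?n x + (y - x) * (a (Suc ?n) - a ?n)" unfolding ell_def by (simp add: algebra_simps)
  also have "\<dots> \<le> ell a ?n x" using dec[OF n1] xy by (simp add: mult_nonneg_nonpos)
  also have "\<dots> \<le> interp a x" using n1 xy by (intro ell_le_interp) auto
  finally show ?thesis .
qed

lemma interp_strict:
  assumes sdec: "\<And>n. n \<ge> 1 \<Longrightarrow> a (Suc n) < a n"
  shows "1 \<le> x \<Longrightarrow> x < y \<Longrightarrow> interp a y < interp a x"
proof -
  assume xy: "1 \<le> x" "x < y"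
  let ?n = "nat \<lfloor>y\<rfloor>"
  have n1: "?n \<ge> 1" using floor_props[of y] xy by simp
  have "interp a y = ell a ?n y" by (rule interp_ell)
  also have "\<dots> = ell a ?n x + (y - x) * (a (Suc ?n) - a ?n)" unfolding ell_def by (simp add: algebra_simps)
  also have "\<dots> < ell a ?n x" using sdec[OF n1] xy by (simp add: mult_pos_neg)
  also have "\<dots> \<le> interp a x" using n1 xy by (intro ell_le_interp) auto
  finally show ?thesis .
qed

lemma interp_12: "lam \<in> {1..2} \<Longrightarrow> interp a lam = a 1 + (lam - 1) * (a 2 - a 1)"
proof -
  assume l: "lam \<in> {1..2}"
  show ?thesis
  proof (cases "lam = 2")
    case True then show ?thesis by (simp add: interp_def)
  next
    case False
    then have "nat \<lfloor>lam\<rfloor> = 1" using l by (simp add: nat_eq_iff floor_eq_iff)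
    then show ?thesis unfolding interp_ell ell_def by (simp add: numeral_2_eq_2)
  qed
qed

lemma interp_cont: "continuous_on {1..} (interp a)"
proof -
  have c1: "continuous_on {1..2} (interp a)"
  proof -
    have "continuous_on {1..2} (\<lambda>lam. a 1 + (lam - 1) * (a 2 - a 1))" by (intro continuous_intros)
    then show ?thesis by (rule continuous_on_eq) (simp add: interp_12)
  qed
  have c2: "continuous_on {1<..} (interp a)"
    by (rule convex_on_continuous) (auto intro: convex_on_subset[OF interp_convex])
  have c3: "continuous_on {2..} (interp a)" by (rule continuous_on_subset[OF c2]) auto
  have "{1..} = {1..2} \<union> {2::real..}" by auto
  then show ?thesis using continuous_on_closed_Un[OF _ _ c1 c3] by simp
qed

end

lemma convex_on_eq_on:
  fixes S :: "real set"
  assumes f: "convex_on S f" and eq: "\<And>x. x \<in> S \<Longrightarrow> f x = g x" and S: "convex S"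
  shows "convex_on S g"
proof (rule convex_onI[OF _ S])
  fix t x y :: real assume t: "0 < t" "t < 1" and xy: "x \<in> S" "y \<in> S"
  have "(1 - t) *\<^sub>R x + t *\<^sub>R y \<in> S" using t xy S by (intro convexD) auto
  then show "g ((1 - t) *\<^sub>R x + t *\<^sub>R y) \<le> (1 - t) * g x + t * g y"
    using convex_onD[OF f, of t x y] t xy eq by simp
qed

lemma integral_pos_Ioo:
  fixes h :: "real \<Rightarrow> real"
  assumes int: "integrable lborel h" and nn: "\<And>y. 0 \<le> h y" and c: "c > 0"
    and pos: "\<And>y. 0 < y \<Longrightarrow> y < c \<Longrightarrow> h y > 0"
  shows "(\<integral>y. h y \<partial>lborel) > 0"
proof -
  have "(\<integral>y. h y \<partial>lborel) \<ge> 0" using nn by (simp add: integral_nonneg_AE)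
  moreover have "(\<integral>y. h y \<partial>lborel) \<noteq> 0"
  proof
    assume "(\<integral>y. h y \<partial>lborel) = 0"
    then have "AE y in lborel. h y = 0" using int nn by (subst (asm) integral_nonneg_eq_0_iff_AE) auto
    then have "AE y in lborel. y \<notin> {0<..<c}"
    proof (rule AE_mp, intro AE_I2 impI)
      fix y :: real assume "h y = 0"
      then show "y \<notin> {0<..<c}" using pos[of y] by auto
    qed
    then have "emeasure lborel {y \<in> space lborel. \<not> y \<notin> {0<..<c}} = 0"
      by (subst (asm) AE_iff_measurable[OF _ refl]) auto
    moreover have "{y \<in> space lborel. \<not> y \<notin> {0<..<c}} = {0<..<c}" by auto
    ultimately have "emeasure lborel {0<..<c} = 0" by simp
    then show False using c by simp
  qed
  ultimately show ?thesis by simp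
qed

locale isir =
  fixes M :: "'a measure" and p q f :: "'a \<Rightarrow> real"
  assumes p_meas[measurable]: "p \<in> borel_measurable M" and q_meas[measurable]: "q \<in> borel_measurable M"
    and p_nn: "\<forall>x\<in>space M. 0 \<le> p x" and q_nn: "\<forall>x\<in>space M. 0 \<le> q x"
    and p_one: "(\<integral>\<^sup>+x. ennreal (p x) \<partial>M) = 1" and q_one: "(\<integral>\<^sup>+x. ennreal (q x) \<partial>M) = 1"
    and pq: "\<forall>x\<in>space M. p x > 0 \<longrightarrow> q x > 0"
    and f_meas[measurable]: "f \<in> borel_measurable M"
    and f_sq: "integrable (density M (\<lambda>x. ennreal (p x))) (\<lambda>x. (f x)\<^sup>2)"
begin

abbreviation "PI \<equiv> density M (\<lambda>x. ennreal (p x))"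
abbreviation "QQ \<equiv> density M (\<lambda>x. ennreal (q x))"
abbreviation "w \<equiv> isw p q"

lemma w_meas[measurable]: "w \<in> borel_measurable M"
  unfolding isw_def by measurable

lemma w_nn: "x \<in> space M \<Longrightarrow> 0 \<le> w x"
  using p_nn q_nn unfolding isw_def by auto

lemma qw: "x \<in> space M \<Longrightarrow> q x * w x = p x"
  using p_nn q_nn pq unfolding isw_def by (force)

lemma w_pos: "x \<in> space M \<Longrightarrow> p x > 0 \<Longrightarrow> w x > 0"
  using p_nn q_nn pq unfolding isw_def by auto

lemma prob_PI: "prob_space PI"
  by (rule prob_spaceI) (simp add: emeasure_density_const emeasure_density p_one)

lemma prob_QQ: "prob_space QQ"
  by (rule prob_spaceI) (simp add: emeasure_density q_one)

lemma space_PI[simp]: "space PI = space M" and space_QQ[simp]: "space QQ = space M"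
  by auto

lemma sets_PI[simp, measurable_cong]: "sets PI = sets M" and sets_QQ[simp, measurable_cong]: "sets QQ = sets M"
  by auto

lemma integral_PI: "h \<in> borel_measurable M \<Longrightarrow> integral\<^sup>L PI h = (\<integral>x. p x * h x \<partial>M)"
  by (subst integral_density) (use p_nn in auto)

lemma integral_QQ: "h \<in> borel_measurable M \<Longrightarrow> integral\<^sup>L QQ h = (\<integral>x. q x * h x \<partial>M)"
  by (subst integral_density) (use q_nn in auto)

lemma integrable_PI: "h \<in> borel_measurable M \<Longrightarrow> integrable PI h \<longleftrightarrow> integrable M (\<lambda>x. p x * h x)"
  by (subst integrable_density) (use p_nn in auto)

lemma integrable_QQ: "h \<in> borel_measurable M \<Longrightarrow> integrable QQ h \<longleftrightarrow> integrable M (\<lambda>x. q x * h x)"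
  by (subst integrable_density) (use q_nn in auto)

lemma integral_QQ_w: "h \<in> borel_measurable M \<Longrightarrow> (\<integral>x. w x * h x \<partial>QQ) = integral\<^sup>L PI h"
proof -
  assume [measurable]: "h \<in> borel_measurable M"
  have "(\<integral>x. w x * h x \<partial>QQ) = (\<integral>x. q x * (w x * h x) \<partial>M)" by (rule integral_QQ) measurable
  also have "\<dots> = (\<integral>x. p x * h x \<partial>M)"
    by (rule Bochner_Integration.integral_cong) (auto simp: qw mult.assoc[symmetric])
  finally show ?thesis by (simp add: integral_PI)
qed

lemma integrable_QQ_w: "h \<in> borel_measurable M \<Longrightarrow> integrable QQ (\<lambda>x. w x * h x) \<longleftrightarrow> integrable PI h"
proof -
  assume [measurable]: "h \<in> borel_measurable M"
  have "integrable QQ (\<lambda>x. w x * h x) \<longleftrightarrow> integrable M (\<lambda>x. q x * (w x * h x))" by (rule integrable_QQ) measurable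
  also have "\<dots> \<longleftrightarrow> integrable M (\<lambda>x. p x * h x)"
    by (rule Bochner_Integration.integrable_cong[OF refl]) (auto simp: qw mult.assoc[symmetric])
  finally show ?thesis by (simp add: integrable_PI)
qed

lemma AE_PI_pos: "AE x in PI. p x > 0"
  by (subst AE_density) auto

lemma abs_le_1_sq: "\<bar>y::real\<bar> \<le> 1 + y\<^sup>2"
proof (cases "\<bar>y\<bar> \<le> 1")
  case False
  then have "\<bar>y\<bar> * 1 \<le> \<bar>y\<bar> * \<bar>y\<bar>" by (intro mult_left_mono) auto
  then show ?thesis by (simp add: power2_eq_square abs_mult_self_eq)
qed (auto intro: add_increasing2)

lemma f_int: "integrable PI f"
proof (rule Bochner_Integration.integrable_bound)
  interpret prob_space PI by (rule prob_PI)
  show "integrable PI (\<lambda>x. 1 + (f x)\<^sup>2)" using f_sq by auto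
  show "AE x in PI. norm (f x) \<le> norm (1 + (f x)\<^sup>2)"
    using abs_le_1_sq by auto
qed simp

lemma int_exp:
  assumes "integrable N g" "t \<ge> 0" "sets N = sets M" "g \<in> borel_measurable M"
  shows "integrable N (\<lambda>x. g x * exp (- (t * w x)))"
proof (rule Bochner_Integration.integrable_bound)
  show "integrable N g" by fact
  have bm: "borel_measurable N = borel_measurable M" by (rule measurable_cong_sets[OF assms(3) refl])
  have [measurable]: "g \<in> borel_measurable N" unfolding bm by (rule assms(4))
  have [measurable]: "w \<in> borel_measurable N" unfolding bm by (rule w_meas)
  show "(\<lambda>x. g x * exp (- (t * w x))) \<in> borel_measurable N" by measurable
  have sp: "space N = space M" using assms(3) by (rule sets_eq_imp_space_eq)
  show "AE x in N. norm (g x * exp (- (t * w x))) \<le> norm (g x)"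
  proof (rule AE_I2)
    fix x assume "x \<in> space N"
    then have "0 \<le> t * w x" using w_nn sp assms(2) by auto
    then have "exp (- (t * w x)) \<le> 1" by simp
    then show "norm (g x * exp (- (t * w x))) \<le> norm (g x)"
      by (simp add: abs_mult mult_left_le)
  qed
qed

lemma int_PI_const: "integrable PI (\<lambda>x. c)"
proof -
  interpret prob_space PI by (rule prob_PI)
  show ?thesis by simp
qed

lemma int_QQ_const: "integrable QQ (\<lambda>x. c)"
proof -
  interpret prob_space QQ by (rule prob_QQ)
  show ?thesis by simp
qed

definition "LL t = (\<integral>x. exp (- (t * w x)) \<partial>QQ)"
definition "CC t = (\<integral>x. exp (- (t * w x)) \<partial>PI)"
definition "BB t = (\<integral>x. f x * exp (- (t * w x)) \<partial>PI)"
definition "AA t = (\<integral>x. (f x)\<^sup>2 * exp (- (t * w x)) \<partial>PI)"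
definition "VQ t c = (\<integral>x. (f x - c)\<^sup>2 * exp (- (t * w x)) \<partial>PI)"
definition "rho t = AA t - (BB t)\<^sup>2 / CC t"
definition "mean = (\<integral>x. f x \<partial>PI)"

lemma int_fc: "integrable PI (\<lambda>x. (f x - c)\<^sup>2)"
proof -
  have "integrable PI (\<lambda>x. (f x)\<^sup>2 - 2 * c * f x + c\<^sup>2)"
    by (intro Bochner_Integration.integrable_add Bochner_Integration.integrable_diff integrable_mult_right f_sq f_int int_PI_const)
  moreover have "\<And>y. (y - c)\<^sup>2 = y\<^sup>2 - 2 * c * y + c\<^sup>2" by (simp add: power2_eq_square algebra_simps)
  ultimately show ?thesis by (simp only:)
qed

lemma int_e1: "t \<ge> 0 \<Longrightarrow> integrable PI (\<lambda>x. exp (- (t * w x)))"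
proof -
  assume t: "t \<ge> 0"
  have m: "(\<lambda>x. 1::real) \<in> borel_measurable M" by measurable
  from int_exp[OF int_PI_const t sets_PI m] show ?thesis by (simp only: mult_1)
qed
lemma int_e2: "t \<ge> 0 \<Longrightarrow> integrable PI (\<lambda>x. f x * exp (- (t * w x)))"
proof -
  assume t: "t \<ge> 0"
  from int_exp[OF f_int t sets_PI f_meas] show ?thesis .
qed
lemma int_e3: "t \<ge> 0 \<Longrightarrow> integrable PI (\<lambda>x. (f x)\<^sup>2 * exp (- (t * w x)))"
proof -
  assume t: "t \<ge> 0"
  have m: "(\<lambda>x. (f x)\<^sup>2) \<in> borel_measurable M" by measurable
  from int_exp[OF f_sq t sets_PI m] show ?thesis .
qed
lemma int_e4: "t \<ge> 0 \<Longrightarrow> integrable PI (\<lambda>x. (f x - c)\<^sup>2 * exp (- (t * w x)))"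
proof -
  assume t: "t \<ge> 0"
  have m: "(\<lambda>x. (f x - c)\<^sup>2) \<in> borel_measurable M" by measurable
  from int_exp[OF int_fc t sets_PI m] show ?thesis .
qed
lemma int_eQ: "t \<ge> 0 \<Longrightarrow> integrable QQ (\<lambda>x. exp (- (t * w x)))"
proof -
  assume t: "t \<ge> 0"
  have m: "(\<lambda>x. 1::real) \<in> borel_measurable M" by measurable
  from int_exp[OF int_QQ_const t sets_QQ m] show ?thesis by (simp only: mult_1)
qed

lemma VQ_eq: "t \<ge> 0 \<Longrightarrow> VQ t c = AA t - 2 * c * BB t + c\<^sup>2 * CC t"
proof -
  assume t: "t \<ge> 0"
  have "VQ t c = (\<integral>x. (f x)\<^sup>2 * exp (- (t * w x)) - 2 * c * (f x * exp (- (t * w x))) + c\<^sup>2 * exp (- (t * w x)) \<partial>PI)"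
    unfolding VQ_def by (rule Bochner_Integration.integral_cong) (auto simp: power2_eq_square algebra_simps)
  also have "\<dots> = AA t - 2 * c * BB t + c\<^sup>2 * CC t"
    using int_e1[OF t] int_e2[OF t] int_e3[OF t] unfolding AA_def BB_def CC_def by simp
  finally show ?thesis .
qed

lemma CC_pos: "t \<ge> 0 \<Longrightarrow> CC t > 0"
proof -
  assume t: "t \<ge> 0"
  interpret prob_space PI by (rule prob_PI)
  have "CC t \<ge> 0" unfolding CC_def by (rule integral_nonneg_AE) auto
  moreover have "CC t \<noteq> 0"
  proof
    assume "CC t = 0"
    then have "AE x in PI. exp (- (t * w x)) = 0"
      unfolding CC_def by (subst (asm) integral_nonneg_eq_0_iff_AE) (use int_e1[OF t] in auto)
    then show False by simp
  qed
  ultimately show ?thesis by simp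
qed

lemma measure_PI_space[simp]: "measure PI (space M) = 1"
  using prob_space.prob_space[OF prob_PI] by simp
lemma measure_QQ_space[simp]: "measure QQ (space M) = 1"
  using prob_space.prob_space[OF prob_QQ] by simp

lemma LL_pos: "t \<ge> 0 \<Longrightarrow> LL t > 0"
proof -
  assume t: "t \<ge> 0"
  interpret prob_space QQ by (rule prob_QQ)
  have "LL t \<ge> 0" unfolding LL_def by (rule integral_nonneg_AE) auto
  moreover have "LL t \<noteq> 0"
  proof
    assume "LL t = 0"
    then have "AE x in QQ. exp (- (t * w x)) = 0"
      unfolding LL_def by (subst (asm) integral_nonneg_eq_0_iff_AE) (use int_eQ[OF t] in auto)
    then show False by simp
  qed
  ultimately show ?thesis by simp
qed

lemma LL_le1: "t \<ge> 0 \<Longrightarrow> LL t \<le> 1"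
proof -
  assume t: "t \<ge> 0"
  interpret prob_space QQ by (rule prob_QQ)
  have "LL t \<le> (\<integral>x. 1 \<partial>QQ)" unfolding LL_def
    by (rule integral_mono_AE') (use t w_nn in auto)
  then show ?thesis by simp
qed

lemma LL0: "LL 0 = 1"
proof -
  interpret prob_space QQ by (rule prob_QQ)
  show ?thesis unfolding LL_def by simp
qed

lemma CC0: "CC 0 = 1"
proof -
  interpret prob_space PI by (rule prob_PI)
  show ?thesis unfolding CC_def by simp
qed

lemma LL_less1: "t > 0 \<Longrightarrow> LL t < 1"
proof (rule ccontr)
  assume t: "t > 0" and "\<not> LL t < 1"
  interpret prob_space QQ by (rule prob_QQ)
  have "LL t = 1" using LL_le1[of t] t \<open>\<not> LL t < 1\<close> by auto
  then have "(\<integral>x. 1 - exp (- (t * w x)) \<partial>QQ) = 0"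
    using int_eQ[of t] t unfolding LL_def by (simp add: prob_space)
  then have "AE x in QQ. 1 - exp (- (t * w x)) = 0"
    by (subst (asm) integral_nonneg_eq_0_iff_AE) (use int_eQ[of t] t w_nn in auto)
  then have "AE x in QQ. w x = 0"
    by (rule AE_mp) (use t in auto)
  then have "(\<integral>x. w x * 1 \<partial>QQ) = (\<integral>x. 0 \<partial>QQ)"
    by (intro integral_cong_AE) auto
  moreover have "(\<integral>x. w x * 1 \<partial>QQ) = 1"
    using integral_QQ_w[of "\<lambda>x. 1"] prob_space_def prob_PI by (simp add: prob_space.prob_space)
  ultimately show False by simp
qed

lemma VQ_nn: "t \<ge> 0 \<Longrightarrow> VQ t c \<ge> 0"
  unfolding VQ_def by (rule integral_nonneg_AE) auto

lemma rho_le_VQ: "t \<ge> 0 \<Longrightarrow> rho t \<le> VQ t c"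
proof -
  assume t: "t \<ge> 0"
  have C: "CC t > 0" using CC_pos[OF t] .
  have "VQ t c - rho t = (c * CC t - BB t)\<^sup>2 / CC t"
    using C unfolding VQ_eq[OF t] rho_def by (simp add: field_simps power2_eq_square)
  also have "\<dots> \<ge> 0" using C by simp
  finally show ?thesis by simp
qed

lemma rho_eq_VQ: "t \<ge> 0 \<Longrightarrow> rho t = VQ t (BB t / CC t)"
proof -
  assume t: "t \<ge> 0"
  have C: "CC t > 0" using CC_pos[OF t] .
  show ?thesis
    using C unfolding VQ_eq[OF t] rho_def by (simp add: field_simps power2_eq_square)
qed

lemma rho_nn: "t \<ge> 0 \<Longrightarrow> rho t \<ge> 0"
  using rho_eq_VQ VQ_nn by simp

lemma VQ_mono: "0 \<le> s \<Longrightarrow> s \<le> t \<Longrightarrow> VQ t c \<le> VQ s c"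
  unfolding VQ_def
proof (rule integral_mono_AE')
  assume st: "0 \<le> s" "s \<le> t"
  show "integrable PI (\<lambda>x. (f x - c)\<^sup>2 * exp (- (s * w x)))" using int_e4 st by simp
  show "AE x in PI. (f x - c)\<^sup>2 * exp (- (t * w x)) \<le> (f x - c)\<^sup>2 * exp (- (s * w x))"
  proof (rule AE_I2)
    fix x assume "x \<in> space PI"
    then have "w x \<ge> 0" using w_nn by simp
    then have "s * w x \<le> t * w x" using st by (simp add: mult_right_mono)
    then show "(f x - c)\<^sup>2 * exp (- (t * w x)) \<le> (f x - c)\<^sup>2 * exp (- (s * w x))"
      by (intro mult_left_mono) auto
  qed
  show "AE x in PI. 0 \<le> (f x - c)\<^sup>2 * exp (- (s * w x))" by simp
qed

lemma rho_mono: "0 \<le> s \<Longrightarrow> s \<le> t \<Longrightarrow> rho t \<le> rho s"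
proof -
  assume st: "0 \<le> s" "s \<le> t"
  have "rho t \<le> VQ t (BB s / CC s)" using rho_le_VQ st by simp
  also have "\<dots> \<le> VQ s (BB s / CC s)" using VQ_mono st by simp
  also have "\<dots> = rho s" using rho_eq_VQ st by simp
  finally show ?thesis .
qed

definition "VV = VQ 0 mean"

lemma VQ0: "VQ 0 c = (\<integral>x. (f x - c)\<^sup>2 \<partial>PI)"
  unfolding VQ_def by simp

lemma BB0: "BB 0 = mean" unfolding BB_def mean_def by simp

lemma rho0: "rho 0 = VV"
  unfolding VV_def using rho_eq_VQ[of 0] CC0 BB0 by simp

lemma rho_le_VV: "t \<ge> 0 \<Longrightarrow> rho t \<le> VV"
  using rho_mono[of 0 t] rho0 by simp

lemma rho_pos1:
  assumes "VV > 0" shows "rho 1 > 0"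
proof (rule ccontr)
  assume "\<not> rho 1 > 0"
  then have "rho 1 = 0" using rho_nn[of 1] by simp
  define c where "c = BB 1 / CC 1"
  have "VQ 1 c = 0" using \<open>rho 1 = 0\<close> rho_eq_VQ[of 1] unfolding c_def by simp
  then have "AE x in PI. (f x - c)\<^sup>2 * exp (- (1 * w x)) = 0"
    unfolding VQ_def by (subst (asm) integral_nonneg_eq_0_iff_AE) (use int_e4[of 1 c] in auto)
  then have "AE x in PI. (f x - c)\<^sup>2 = 0" by (rule AE_mp) auto
  then have "VQ 0 c = (\<integral>x. 0 \<partial>PI)" unfolding VQ0 by (intro integral_cong_AE) auto
  then have "VQ 0 c = 0" by simp
  moreover have "VV \<le> VQ 0 c" using rho_le_VQ[of 0 c] rho0 by simp
  ultimately show False using assms by simp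
qed

lemma AA_lim: "(\<lambda>n. AA (real n)) \<longlonglongrightarrow> 0"
proof -
  have "(\<lambda>n. \<integral>x. (f x)\<^sup>2 * exp (- (real n * w x)) \<partial>PI) \<longlonglongrightarrow> (\<integral>x. 0 \<partial>PI)"
  proof (rule integral_dominated_convergence)
    show "integrable PI (\<lambda>x. (f x)\<^sup>2)" by (rule f_sq)
    show "AE x in PI. (\<lambda>n. (f x)\<^sup>2 * exp (- (real n * w x))) \<longlonglongrightarrow> 0"
      using AE_PI_pos
    proof (rule AE_mp, intro AE_I2 impI)
      fix x assume x: "x \<in> space PI" "p x > 0"
      then have wx: "w x > 0" using w_pos by simp
      have "(\<lambda>n. exp (- w x) ^ n) \<longlonglongrightarrow> 0"
        by (rule LIMSEQ_power_zero) (use wx in simp)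
      moreover have "\<And>n. exp (- (real n * w x)) = exp (- w x) ^ n"
        by (metis exp_of_nat_mult mult_minus_right)
      ultimately have "(\<lambda>n. exp (- (real n * w x))) \<longlonglongrightarrow> 0" by simp
      then show "(\<lambda>n. (f x)\<^sup>2 * exp (- (real n * w x))) \<longlonglongrightarrow> 0"
        by (auto intro: tendsto_mult_right_zero)
    qed
    fix n :: nat
    show "AE x in PI. norm ((f x)\<^sup>2 * exp (- (real n * w x))) \<le> (f x)\<^sup>2"
    proof (rule AE_I2)
      fix x assume "x \<in> space PI"
      then have "0 \<le> real n * w x" using w_nn by simp
      then show "norm ((f x)\<^sup>2 * exp (- (real n * w x))) \<le> (f x)\<^sup>2"
        by (simp add: abs_mult mult_left_le)
    qed
  qed auto
  then show ?thesis unfolding AA_def by simp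
qed

lemma rho_small: "y > 0 \<Longrightarrow> \<exists>t\<ge>0. rho t \<le> y"
proof -
  assume y: "y > 0"
  from AA_lim y obtain n where "\<bar>AA (real n) - 0\<bar> < y"
    by (auto simp: LIMSEQ_def dist_real_def)
  moreover have "rho (real n) \<le> VQ (real n) 0" by (rule rho_le_VQ) simp
  moreover have "VQ (real n) 0 = AA (real n)" unfolding VQ_def AA_def by simp
  ultimately show ?thesis by (intro exI[of _ "real n"]) auto
qed

abbreviation "Qn I \<equiv> PiM I (\<lambda>_. QQ)"

definition "SW I zs = (\<Sum>j\<in>I. w (zs j))"
definition "Rf I x zs = (w x * f x + (\<Sum>i\<in>I. w (zs i) * f (zs i))) / (w x + SW I zs)"
definition "Gf I x zs = (\<Sum>i\<in>I. w (zs i) * (f x - f (zs i))) / (w x + SW I zs)"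

lemma PN_eq:
  assumes "N \<ge> 1"
  shows "PN M p q N f x = (\<integral>zs. Rf {2..N} x zs \<partial>Qn {2..N})"
  unfolding PN_def
proof (rule Bochner_Integration.integral_cong[OF refl])
  fix zs :: "nat \<Rightarrow> 'a"
  let ?I = "{2..N}"
  have ins: "{1..N} = insert 1 ?I" using assms by auto
  have n1: "1 \<notin> ?I" by simp
  let ?z = "zs(1 := x)"
  have s1: "(\<Sum>j\<in>{1..N}. w (?z j)) = w x + SW ?I zs"
    unfolding ins SW_def using n1 by (simp add: sum.insert_if)
  have s2: "(\<Sum>i\<in>{1..N}. w (?z i) / (w x + SW ?I zs) * f (?z i))
      = (\<Sum>i\<in>{1..N}. w (?z i) * f (?z i)) / (w x + SW ?I zs)"
    by (simp add: sum_divide_distrib)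
  have s3: "(\<Sum>i\<in>{1..N}. w (?z i) * f (?z i)) = w x * f x + (\<Sum>i\<in>?I. w (zs i) * f (zs i))"
    unfolding ins using n1 by (simp add: sum.insert_if)
  show "(let z = ?z in \<Sum>i\<in>{1..N}. w (z i) / (\<Sum>j\<in>{1..N}. w (z j)) * f (z i)) = Rf ?I x zs"
    unfolding Let_def s1 s2 s3 Rf_def ..
qed

lemma SW_nn: "(\<And>i. i \<in> I \<Longrightarrow> zs i \<in> space M) \<Longrightarrow> SW I zs \<ge> 0"
  unfolding SW_def by (intro sum_nonneg) (auto intro: w_nn)

lemma exp_int:
  fixes s :: real assumes s: "s > 0"
  shows "integrable lborel (\<lambda>t. indicator {0..} t * exp (- (t * s)))"
    and "(\<integral>t. indicator {0..} t * exp (- (t * s)) \<partial>lborel) = 1 / s"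
proof -
  interpret prob_space "density lborel (exponential_density s)"
    by (rule prob_space_exponential_density[OF s])
  have ed: "\<And>t. exponential_density s t = s * (indicator {0..} t * exp (- (t * s)))"
    unfolding exponential_density_def by (auto simp: indicator_def mult.commute)
  have "emeasure (density lborel (exponential_density s)) UNIV = 1"
    using emeasure_space_1 by simp
  then have "(\<integral>\<^sup>+t. ennreal (exponential_density s t) \<partial>lborel) = 1"
    by (simp add: emeasure_density)
  then have nn: "(\<integral>\<^sup>+t. ennreal s * ennreal (indicator {0..} t * exp (- (t * s))) \<partial>lborel) = 1"
    unfolding ed using s by (simp add: ennreal_mult)
  have nn2: "(\<integral>\<^sup>+t. ennreal (indicator {0..} t * exp (- (t * s))) \<partial>lborel) = ennreal (1 / s)"
  proof -
    have "ennreal s * (\<integral>\<^sup>+t. ennreal (indicator {0..} t * exp (- (t * s))) \<partial>lborel) = 1"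
      using nn by (subst nn_integral_cmult[symmetric]) auto
    then have "(\<integral>\<^sup>+t. ennreal (indicator {0..} t * exp (- (t * s))) \<partial>lborel) * ennreal s / ennreal s = 1 / ennreal s"
      by (simp add: mult.commute)
    also have "(\<integral>\<^sup>+t. ennreal (indicator {0..} t * exp (- (t * s))) \<partial>lborel) * ennreal s / ennreal s
        = (\<integral>\<^sup>+t. ennreal (indicator {0..} t * exp (- (t * s))) \<partial>lborel)"
      using s by (intro ennreal_mult_divide_eq) auto
    also have "1 / ennreal s = ennreal (1 / s)" using divide_ennreal[of 1 s] s by simp
    finally show ?thesis .
  qed
  show int: "integrable lborel (\<lambda>t. indicator {0..} t * exp (- (t * s)))"
    by (rule integrableI_nonneg) (use nn2 in auto)
  show "(\<integral>t. indicator {0..} t * exp (- (t * s)) \<partial>lborel) = 1 / s"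
    using nn2 int s by (subst integral_eq_nn_integral) auto
qed

lemma space_Qn: "zs \<in> space (Qn I) \<Longrightarrow> i \<in> I \<Longrightarrow> zs i \<in> space M"
  by (auto simp: space_PiM PiE_def Pi_def)

definition "FF I xz t = indicator {0..} t * (f (fst xz) * (\<Sum>i\<in>I. w (snd xz i) * (f (fst xz) - f (snd xz i)))
   * exp (- (t * (w (fst xz) + SW I (snd xz)))))"

lemma FF_meas: "(\<lambda>z. FF I (fst z) (snd z)) \<in> borel_measurable ((PI \<Otimes>\<^sub>M Qn I) \<Otimes>\<^sub>M lborel)"
  unfolding FF_def SW_def by measurable

lemma FF_t:
  assumes I: "finite I" and x: "x \<in> space M" and zs: "zs \<in> space (Qn I)"
  shows "integrable lborel (FF I (x, zs))" and "(\<integral>t. FF I (x, zs) t \<partial>lborel) = f x * Gf I x zs"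
proof -
  let ?S = "w x + SW I zs"
  let ?c = "f x * (\<Sum>i\<in>I. w (zs i) * (f x - f (zs i)))"
  have S: "?S \<ge> 0" using w_nn[OF x] SW_nn[of I zs] space_Qn[OF zs] by simp
  have eq: "FF I (x, zs) = (\<lambda>t. ?c * (indicator {0..} t * exp (- (t * ?S))))"
    unfolding FF_def by (auto simp: fun_eq_iff)
  have conj: "integrable lborel (FF I (x, zs)) \<and> (\<integral>t. FF I (x, zs) t \<partial>lborel) = f x * Gf I x zs"
  proof (cases "?S > 0")
    case True
    show ?thesis unfolding eq using exp_int[OF True] by (simp add: Gf_def)
  next
    case False
    then have S0: "?S = 0" using S by simp
    then have "w x = 0" "SW I zs = 0" using w_nn[OF x] SW_nn[of I zs] space_Qn[OF zs] by auto
    then have "\<forall>i\<in>I. w (zs i) = 0"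
      unfolding SW_def using I by (subst (asm) sum_nonneg_eq_0_iff) (auto intro: w_nn space_Qn[OF zs])
    then have c0: "?c = 0" by simp
    have "FF I (x, zs) = (\<lambda>t. 0)" unfolding eq c0 by simp
    moreover have "Gf I x zs = 0" unfolding Gf_def using S0 by simp
    ultimately show ?thesis by simp
  qed
  then show "integrable lborel (FF I (x, zs))" and "(\<integral>t. FF I (x, zs) t \<partial>lborel) = f x * Gf I x zs"
    by auto
qed

lemma Gf_bound:
  assumes I: "finite I" and x: "x \<in> space M" "w x > 0" and zs: "zs \<in> space (Qn I)"
  shows "\<bar>f x * Gf I x zs\<bar> \<le> (\<Sum>i\<in>I. 3/2 * (f x)\<^sup>2 + (f (zs i))\<^sup>2 * w (zs i) / (2 * w x))"
proof -
  let ?S = "w x + SW I zs"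
  have SW: "SW I zs \<ge> 0" using SW_nn[of I zs] space_Qn[OF zs] by simp
  have WS: "w x \<le> ?S" using SW by simp
  have S: "?S > 0" using x SW by simp
  have vS: "w (zs i) \<le> ?S" if i: "i \<in> I" for i
  proof -
    have "w (zs i) \<le> SW I zs" unfolding SW_def
      using I i by (intro member_le_sum) (auto intro: w_nn space_Qn[OF zs])
    then show ?thesis using x by simp
  qed
  have "\<bar>f x * Gf I x zs\<bar> = \<bar>\<Sum>i\<in>I. f x * (w (zs i) * (f x - f (zs i))) / ?S\<bar>"
    unfolding Gf_def by (simp add: sum_distrib_left sum_divide_distrib)
  also have "\<dots> \<le> (\<Sum>i\<in>I. \<bar>f x * (w (zs i) * (f x - f (zs i))) / ?S\<bar>)" by (rule sum_abs)
  also have "\<dots> = (\<Sum>i\<in>I. \<bar>f x\<bar> * w (zs i) * \<bar>f x - f (zs i)\<bar> / ?S)"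
    using S by (intro sum.cong) (auto simp: abs_mult w_nn space_Qn[OF zs])
  also have "\<dots> \<le> (\<Sum>i\<in>I. 3/2 * (f x)\<^sup>2 + (f (zs i))\<^sup>2 * w (zs i) / (2 * w x))"
    using x WS vS by (intro sum_mono term_bound) (auto intro: w_nn space_Qn[OF zs])
  finally show ?thesis .
qed

lemma prod_QQ: "product_prob_space (\<lambda>_. QQ)"
  by (rule product_prob_spaceI) (rule prob_QQ)

lemma prob_Qn: "prob_space (Qn I)"
  by (rule prob_space_PiM) (rule prob_QQ)

lemma comp_int:
  fixes g :: "'a \<Rightarrow> real"
  assumes I: "finite I" "i \<in> I" and g: "integrable QQ g"
  shows "integrable (Qn I) (\<lambda>zs. g (zs i))" and "(\<integral>zs. g (zs i) \<partial>Qn I) = integral\<^sup>L QQ g"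
proof -
  interpret product_prob_space "\<lambda>_. QQ" I by (rule prod_QQ)
  let ?F = "\<lambda>j. if j = i then g else (\<lambda>_. 1::real)"
  have intF: "\<And>j. j \<in> I \<Longrightarrow> integrable QQ (?F j)" using g int_QQ_const by auto
  have eq: "(\<Prod>j\<in>I. ?F j (zs j)) = g (zs i)" for zs
  proof -
    have "(\<Prod>j\<in>I. ?F j (zs j)) = (\<Prod>j\<in>I. if j = i then g (zs j) else 1)" by (intro prod.cong) auto
    also have "\<dots> = g (zs i)" using I by (simp add: prod.delta)
    finally show ?thesis .
  qed
  have "integrable (Qn I) (\<lambda>zs. \<Prod>j\<in>I. ?F j (zs j))" by (rule product_integrable_prod[OF I(1) intF])
  then show "integrable (Qn I) (\<lambda>zs. g (zs i))" unfolding eq .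
  have "(\<integral>zs. (\<Prod>j\<in>I. ?F j (zs j)) \<partial>Qn I) = (\<Prod>j\<in>I. integral\<^sup>L QQ (?F j))"
    by (rule product_integral_prod[OF I(1) intF])
  also have "\<dots> = integral\<^sup>L QQ g"
  proof -
    have "(\<Prod>j\<in>I. integral\<^sup>L QQ (?F j)) = (\<Prod>j\<in>I. if j = i then integral\<^sup>L QQ g else 1)"
      by (intro prod.cong) (auto simp: prob_space.prob_space[OF prob_QQ])
    also have "\<dots> = integral\<^sup>L QQ g" using I by (simp add: prod.delta)
    finally show ?thesis .
  qed
  finally show "(\<integral>zs. g (zs i) \<partial>Qn I) = integral\<^sup>L QQ g" unfolding eq .
qed

lemma FF_t_norm:
  assumes I: "finite I" and x: "x \<in> space M" and zs: "zs \<in> space (Qn I)"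
  shows "(\<integral>t. norm (FF I (x, zs) t) \<partial>lborel) = \<bar>f x * Gf I x zs\<bar>"
proof -
  let ?S = "w x + SW I zs"
  let ?c = "f x * (\<Sum>i\<in>I. w (zs i) * (f x - f (zs i)))"
  have S: "?S \<ge> 0" using w_nn[OF x] SW_nn[of I zs] space_Qn[OF zs] by simp
  have eq: "(\<lambda>t. norm (FF I (x, zs) t)) = (\<lambda>t. \<bar>?c\<bar> * (indicator {0..} t * exp (- (t * ?S))))"
    unfolding FF_def by (auto simp: fun_eq_iff abs_mult indicator_def)
  show ?thesis
  proof (cases "?S > 0")
    case True
    show ?thesis unfolding eq using exp_int[OF True] True by (simp add: Gf_def abs_mult)
  next
    case False
    then have S0: "?S = 0" using S by simp
    then have "w x = 0" "SW I zs = 0" using w_nn[OF x] SW_nn[of I zs] space_Qn[OF zs] by auto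
    then have "\<forall>i\<in>I. w (zs i) = 0"
      unfolding SW_def using I by (subst (asm) sum_nonneg_eq_0_iff) (auto intro: w_nn space_Qn[OF zs])
    then have c0: "?c = 0" by simp
    show ?thesis unfolding eq c0 using S0 by (simp add: Gf_def)
  qed
qed

lemma int_inv_w: "integrable PI (\<lambda>x. 1 / w x)"
proof -
  have qint: "integrable M q"
    by (rule integrableI_nonneg) (use q_nn q_one in \<open>auto simp: AE_I2\<close>)
  have "integrable M (\<lambda>x. p x * (1 / w x))"
  proof (rule Bochner_Integration.integrable_bound[OF qint])
    show "(\<lambda>x. p x * (1 / w x)) \<in> borel_measurable M" by measurable
    show "AE x in M. norm (p x * (1 / w x)) \<le> norm (q x)"
    proof (rule AE_I2)
      fix x assume x: "x \<in> space M"
      show "norm (p x * (1 / w x)) \<le> norm (q x)"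
      proof (cases "p x > 0")
        case True
        then have "q x > 0" using pq x by auto
        then show ?thesis using True by (simp add: isw_def)
      next
        case False
        then show ?thesis by (simp add: isw_def)
      qed
    qed
  qed
  then show ?thesis by (subst integrable_PI) auto
qed

definition "F2 = (\<integral>x. (f x)\<^sup>2 \<partial>PI)"

lemma int_f2w: "integrable QQ (\<lambda>z. (f z)\<^sup>2 * w z)"
  using integrable_QQ_w[of "\<lambda>x. (f x)\<^sup>2"] f_sq by (simp add: mult.commute)

lemma int_f2w_val: "(\<integral>z. (f z)\<^sup>2 * w z \<partial>QQ) = F2"
  using integral_QQ_w[of "\<lambda>x. (f x)\<^sup>2"] unfolding F2_def by (simp add: mult.commute)

lemma Gf_meas: "(\<lambda>zs. f x * Gf I x zs) \<in> borel_measurable (Qn I)"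
  unfolding Gf_def SW_def by measurable

lemma Gf_meas2: "(\<lambda>xz. f (fst xz) * Gf I (fst xz) (snd xz)) \<in> borel_measurable (PI \<Otimes>\<^sub>M Qn I)"
  unfolding Gf_def SW_def by measurable

lemma Gf_int:
  assumes I: "finite I" and x: "x \<in> space M" "w x > 0"
  shows "integrable (Qn I) (\<lambda>zs. f x * Gf I x zs)"
    and "(\<integral>zs. \<bar>f x * Gf I x zs\<bar> \<partial>Qn I) \<le> real (card I) * (3/2 * (f x)\<^sup>2 + F2 / (2 * w x))"
proof -
  interpret Qp: prob_space "Qn I" by (rule prob_Qn)
  have ci: "integrable (Qn I) (\<lambda>zs. (f (zs i))\<^sup>2 * w (zs i))" if "i \<in> I" for i
    using comp_int(1)[OF I that int_f2w] .
  have cv: "(\<integral>zs. (f (zs i))\<^sup>2 * w (zs i) \<partial>Qn I) = F2" if "i \<in> I" for i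
    using comp_int(2)[OF I that int_f2w] int_f2w_val by simp
  have bint: "integrable (Qn I) (\<lambda>zs. \<Sum>i\<in>I. 3/2 * (f x)\<^sup>2 + (f (zs i))\<^sup>2 * w (zs i) / (2 * w x))"
    using ci by (intro Bochner_Integration.integrable_sum Bochner_Integration.integrable_add
        Bochner_Integration.integrable_divide) auto
  have bnd: "AE zs in Qn I. \<bar>f x * Gf I x zs\<bar> \<le> (\<Sum>i\<in>I. 3/2 * (f x)\<^sup>2 + (f (zs i))\<^sup>2 * w (zs i) / (2 * w x))"
    by (intro AE_I2 Gf_bound[OF I x])
  show "integrable (Qn I) (\<lambda>zs. f x * Gf I x zs)"
    by (rule Bochner_Integration.integrable_bound[OF bint Gf_meas]) (use bnd in auto)
  have "(\<integral>zs. \<bar>f x * Gf I x zs\<bar> \<partial>Qn I) \<le> (\<integral>zs. (\<Sum>i\<in>I. 3/2 * (f x)\<^sup>2 + (f (zs i))\<^sup>2 * w (zs i) / (2 * w x)) \<partial>Qn I)"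
  proof (rule integral_mono_AE'[OF bint bnd])
    show "AE zs in Qn I. 0 \<le> (\<Sum>i\<in>I. 3/2 * (f x)\<^sup>2 + (f (zs i))\<^sup>2 * w (zs i) / (2 * w x))"
      using bnd by eventually_elim (rule order_trans[OF abs_ge_zero])
  qed
  also have "\<dots> = (\<Sum>i\<in>I. 3/2 * (f x)\<^sup>2 + F2 / (2 * w x))"
    using ci cv by (subst Bochner_Integration.integral_sum) (auto intro!: sum.cong simp: Qp.prob_space)
  also have "\<dots> = real (card I) * (3/2 * (f x)\<^sup>2 + F2 / (2 * w x))" by simp
  finally show "(\<integral>zs. \<bar>f x * Gf I x zs\<bar> \<partial>Qn I) \<le> real (card I) * (3/2 * (f x)\<^sup>2 + F2 / (2 * w x))" .
qed

lemma sf_Qn: "sigma_finite_measure (Qn I)" by (rule prob_space_imp_sigma_finite[OF prob_Qn])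

lemma pair_PQ: "pair_sigma_finite PI (Qn I)"
  by (intro pair_sigma_finite.intro prob_space_imp_sigma_finite prob_PI prob_Qn)

lemma prob_MP: "prob_space (PI \<Otimes>\<^sub>M Qn I)"
proof -
  interpret pair_prob_space PI "Qn I"
    by (intro pair_prob_space.intro pair_PQ prob_PI prob_Qn)
  show ?thesis by (rule P.prob_space_axioms)
qed

lemma pair_MPL: "pair_sigma_finite (PI \<Otimes>\<^sub>M Qn I) lborel"
  by (intro pair_sigma_finite.intro prob_space_imp_sigma_finite prob_MP lborel.sigma_finite_measure_axioms)

lemma space_MP: "xz \<in> space (PI \<Otimes>\<^sub>M Qn I) \<Longrightarrow> fst xz \<in> space M \<and> snd xz \<in> space (Qn I)"
  by (auto simp: space_pair_measure)

lemma Gf_int2: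
  assumes I: "finite I"
  shows "integrable (PI \<Otimes>\<^sub>M Qn I) (\<lambda>xz. f (fst xz) * Gf I (fst xz) (snd xz))"
proof -
  interpret PQ: pair_sigma_finite PI "Qn I" by (rule pair_PQ)
  have m[measurable]: "(\<lambda>xz. f (fst xz) * Gf I (fst xz) (snd xz)) \<in> borel_measurable (PI \<Otimes>\<^sub>M Qn I)"
    by (rule Gf_meas2)
  show ?thesis
  proof (rule PQ.Fubini_integrable)
    show "(\<lambda>xz. f (fst xz) * Gf I (fst xz) (snd xz)) \<in> borel_measurable (PI \<Otimes>\<^sub>M Qn I)" by (rule m)
    have bint: "integrable PI (\<lambda>x. real (card I) * (3/2 * (f x)\<^sup>2 + F2 / 2 * (1 / w x)))"
      using f_sq int_inv_w by (intro integrable_mult_right Bochner_Integration.integrable_add) auto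
    have mm: "(\<lambda>x. \<integral>y. norm (f (fst (x, y)) * Gf I (fst (x, y)) (snd (x, y))) \<partial>Qn I) \<in> borel_measurable PI"
      by measurable
    show "integrable PI (\<lambda>x. \<integral>y. norm (f (fst (x, y)) * Gf I (fst (x, y)) (snd (x, y))) \<partial>Qn I)"
    proof (rule Bochner_Integration.integrable_bound[OF bint mm])
      show "AE x in PI. norm (\<integral>y. norm (f (fst (x, y)) * Gf I (fst (x, y)) (snd (x, y))) \<partial>Qn I)
          \<le> norm (real (card I) * (3/2 * (f x)\<^sup>2 + F2 / 2 * (1 / w x)))"
        using AE_PI_pos
      proof (rule AE_mp, intro AE_I2 impI)
        fix x assume x: "x \<in> space PI" "p x > 0"
        then have wx: "w x > 0" using w_pos by simp
        have "0 \<le> (\<integral>y. \<bar>f x * Gf I x y\<bar> \<partial>Qn I)" by (rule integral_nonneg_AE) auto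
        moreover have "(\<integral>y. \<bar>f x * Gf I x y\<bar> \<partial>Qn I) \<le> real (card I) * (3/2 * (f x)\<^sup>2 + F2 / (2 * w x))"
          using Gf_int(2)[OF I _ wx] x by simp
        moreover have "F2 \<ge> 0" unfolding F2_def by (rule integral_nonneg_AE) auto
        ultimately show "norm (\<integral>y. norm (f (fst (x, y)) * Gf I (fst (x, y)) (snd (x, y))) \<partial>Qn I)
          \<le> norm (real (card I) * (3/2 * (f x)\<^sup>2 + F2 / 2 * (1 / w x)))"
          using wx by (simp add: abs_of_nonneg)
      qed
    qed
    show "AE x in PI. integrable (Qn I) (\<lambda>y. f (fst (x, y)) * Gf I (fst (x, y)) (snd (x, y)))"
      using AE_PI_pos
    proof (rule AE_mp, intro AE_I2 impI)
      fix x assume x: "x \<in> space PI" "p x > 0"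
      then have wx: "w x > 0" using w_pos by simp
      show "integrable (Qn I) (\<lambda>y. f (fst (x, y)) * Gf I (fst (x, y)) (snd (x, y)))"
        using Gf_int(1)[OF I _ wx] x by simp
    qed
  qed
qed

lemma FF_int:
  assumes I: "finite I"
  shows "integrable ((PI \<Otimes>\<^sub>M Qn I) \<Otimes>\<^sub>M lborel) (\<lambda>z. FF I (fst z) (snd z))"
proof -
  interpret PL: pair_sigma_finite "PI \<Otimes>\<^sub>M Qn I" lborel by (rule pair_MPL)
  show ?thesis
  proof (rule PL.Fubini_integrable)
    show "(\<lambda>z. FF I (fst z) (snd z)) \<in> borel_measurable ((PI \<Otimes>\<^sub>M Qn I) \<Otimes>\<^sub>M lborel)" by (rule FF_meas)
    have "integrable (PI \<Otimes>\<^sub>M Qn I) (\<lambda>xz. \<bar>f (fst xz) * Gf I (fst xz) (snd xz)\<bar>)"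
      using Gf_int2[OF I] by (rule integrable_abs)
    then show "integrable (PI \<Otimes>\<^sub>M Qn I) (\<lambda>xz. \<integral>t. norm (FF I (fst (xz, t)) (snd (xz, t))) \<partial>lborel)"
    proof (rule Bochner_Integration.integrable_cong[OF refl, THEN iffD1, rotated])
      fix xz assume "xz \<in> space (PI \<Otimes>\<^sub>M Qn I)"
      then have "fst xz \<in> space M \<and> snd xz \<in> space (Qn I)" by (rule space_MP)
      then have "fst xz \<in> space M" "snd xz \<in> space (Qn I)" by auto
      then show "\<bar>f (fst xz) * Gf I (fst xz) (snd xz)\<bar> = (\<integral>t. norm (FF I (fst (xz, t)) (snd (xz, t))) \<partial>lborel)"
        using FF_t_norm[OF I, of "fst xz" "snd xz"] by simp
    qed
    show "AE xz in PI \<Otimes>\<^sub>M Qn I. integrable lborel (\<lambda>t. FF I (fst (xz, t)) (snd (xz, t)))"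
    proof (rule AE_I2)
      fix xz assume "xz \<in> space (PI \<Otimes>\<^sub>M Qn I)"
      then have "fst xz \<in> space M \<and> snd xz \<in> space (Qn I)" by (rule space_MP)
      then have "fst xz \<in> space M" "snd xz \<in> space (Qn I)" by auto
      then show "integrable lborel (\<lambda>t. FF I (fst (xz, t)) (snd (xz, t)))"
        using FF_t(1)[OF I, of "fst xz" "snd xz"] by simp
    qed
  qed
qed

lemma Rf_eq:
  assumes I: "finite I" and x: "x \<in> space M" "w x > 0" and zs: "zs \<in> space (Qn I)"
  shows "Rf I x zs = f x - Gf I x zs"
proof -
  let ?S = "w x + SW I zs"
  have SW: "SW I zs \<ge> 0" using SW_nn[of I zs] space_Qn[OF zs] by simp
  have S: "?S > 0" using x SW by simp
  have "(\<Sum>i\<in>I. w (zs i) * (f x - f (zs i))) = f x * SW I zs - (\<Sum>i\<in>I. w (zs i) * f (zs i))"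
    unfolding SW_def by (simp add: algebra_simps sum_subtractf sum_distrib_left)
  then show ?thesis using S unfolding Rf_def Gf_def by (simp add: field_simps)
qed

lemma Rf_meas[measurable]: "(\<lambda>xz. Rf I (fst xz) (snd xz)) \<in> borel_measurable (PI \<Otimes>\<^sub>M Qn I)"
  unfolding Rf_def SW_def by measurable

definition "TT I = (\<integral>z. FF I (fst z) (snd z) \<partial>((PI \<Otimes>\<^sub>M Qn I) \<Otimes>\<^sub>M lborel))"

lemma TT_eq1:
  assumes I: "finite I"
  shows "integrable PI (\<lambda>x. f x * (f x - (\<integral>zs. Rf I x zs \<partial>Qn I)))"
    and "TT I = (\<integral>x. f x * (f x - (\<integral>zs. Rf I x zs \<partial>Qn I)) \<partial>PI)"
proof -
  interpret PQ: pair_sigma_finite PI "Qn I" by (rule pair_PQ)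
  interpret PL: pair_sigma_finite "PI \<Otimes>\<^sub>M Qn I" lborel by (rule pair_MPL)
  interpret Qp: prob_space "Qn I" by (rule prob_Qn)
  have [measurable]: "(\<lambda>xz. f (fst xz) * Gf I (fst xz) (snd xz)) \<in> borel_measurable (PI \<Otimes>\<^sub>M Qn I)"
    by (rule Gf_meas2)
  have ae: "AE x in PI. (\<integral>zs. f x * Gf I x zs \<partial>Qn I) = f x * (f x - (\<integral>zs. Rf I x zs \<partial>Qn I))"
    using AE_PI_pos
  proof (rule AE_mp, intro AE_I2 impI)
    fix x assume x: "x \<in> space PI" "p x > 0"
    then have xM: "x \<in> space M" by simp
    have wx: "w x > 0" using x w_pos by simp
    have gi: "integrable (Qn I) (\<lambda>zs. f x * Gf I x zs)" using Gf_int(1)[OF I xM wx] .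
    show "(\<integral>zs. f x * Gf I x zs \<partial>Qn I) = f x * (f x - (\<integral>zs. Rf I x zs \<partial>Qn I))"
    proof (cases "f x = 0")
      case True then show ?thesis by simp
    next
      case False
      have gi2: "integrable (Qn I) (\<lambda>zs. Gf I x zs)"
        using integrable_mult_right[OF gi, of "1 / f x"] False by simp
      have "(\<integral>zs. Rf I x zs \<partial>Qn I) = (\<integral>zs. f x - Gf I x zs \<partial>Qn I)"
        by (rule Bochner_Integration.integral_cong[OF refl]) (rule Rf_eq[OF I xM wx])
      also have "\<dots> = f x - (\<integral>zs. Gf I x zs \<partial>Qn I)"
        using gi2 by (simp add: Qp.prob_space)
      finally show ?thesis by simp
    qed
  qed
  have i1: "integrable PI (\<lambda>x. \<integral>zs. f x * Gf I x zs \<partial>Qn I)"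
    using PQ.integrable_fst'[OF Gf_int2[OF I]] by simp
  have m2: "(\<lambda>x. f x * (f x - (\<integral>zs. Rf I x zs \<partial>Qn I))) \<in> borel_measurable PI" by measurable
  show "integrable PI (\<lambda>x. f x * (f x - (\<integral>zs. Rf I x zs \<partial>Qn I)))"
    using i1 m2 ae by (rule integrable_cong_AE_imp)
  have "TT I = (\<integral>xz. (\<integral>t. FF I xz t \<partial>lborel) \<partial>(PI \<Otimes>\<^sub>M Qn I))"
    unfolding TT_def using PL.integral_fst'[OF FF_int[OF I]] by simp
  also have "\<dots> = (\<integral>xz. f (fst xz) * Gf I (fst xz) (snd xz) \<partial>(PI \<Otimes>\<^sub>M Qn I))"
  proof (rule Bochner_Integration.integral_cong[OF refl])
    fix xz assume "xz \<in> space (PI \<Otimes>\<^sub>M Qn I)"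
    then have "fst xz \<in> space M \<and> snd xz \<in> space (Qn I)" by (rule space_MP)
    then show "(\<integral>t. FF I xz t \<partial>lborel) = f (fst xz) * Gf I (fst xz) (snd xz)"
      using FF_t(2)[OF I, of "fst xz" "snd xz"] by simp
  qed
  also have "\<dots> = (\<integral>x. (\<integral>zs. f x * Gf I x zs \<partial>Qn I) \<partial>PI)"
    using PQ.integral_fst'[OF Gf_int2[OF I]] by simp
  also have "\<dots> = (\<integral>x. f x * (f x - (\<integral>zs. Rf I x zs \<partial>Qn I)) \<partial>PI)"
  proof -
    have m1: "(\<lambda>x. \<integral>zs. f x * Gf I x zs \<partial>Qn I) \<in> borel_measurable PI"
      unfolding Gf_def SW_def by measurable
    show ?thesis by (rule integral_cong_AE[OF m1 m2 ae])
  qed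
  finally show "TT I = (\<integral>x. f x * (f x - (\<integral>zs. Rf I x zs \<partial>Qn I)) \<partial>PI)" .
qed

lemma Kprod:
  fixes g :: "'a \<Rightarrow> real"
  assumes I: "finite I" "i \<in> I" and g: "integrable QQ g" and t: "t \<ge> 0"
  shows "integrable (Qn I) (\<lambda>zs. g (zs i) * (\<Prod>j\<in>I-{i}. exp (- (t * w (zs j)))))"
    and "(\<integral>zs. g (zs i) * (\<Prod>j\<in>I-{i}. exp (- (t * w (zs j)))) \<partial>Qn I) = integral\<^sup>L QQ g * LL t ^ (card I - 1)"
proof -
  interpret product_prob_space "\<lambda>_. QQ" I by (rule prod_QQ)
  let ?H = "\<lambda>j. if j = i then g else (\<lambda>z. exp (- (t * w z)))"
  have intH: "\<And>j. j \<in> I \<Longrightarrow> integrable QQ (?H j)" using g int_eQ[OF t] by auto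
  have eq: "(\<Prod>j\<in>I. ?H j (zs j)) = g (zs i) * (\<Prod>j\<in>I-{i}. exp (- (t * w (zs j))))" for zs
  proof -
    have "(\<Prod>j\<in>I. ?H j (zs j)) = ?H i (zs i) * (\<Prod>j\<in>I-{i}. ?H j (zs j))"
      using I by (rule prod.remove)
    also have "(\<Prod>j\<in>I-{i}. ?H j (zs j)) = (\<Prod>j\<in>I-{i}. exp (- (t * w (zs j))))"
      by (intro prod.cong) auto
    finally show ?thesis by simp
  qed
  have "integrable (Qn I) (\<lambda>zs. \<Prod>j\<in>I. ?H j (zs j))" by (rule product_integrable_prod[OF I(1) intH])
  then show "integrable (Qn I) (\<lambda>zs. g (zs i) * (\<Prod>j\<in>I-{i}. exp (- (t * w (zs j)))))" unfolding eq .
  have "(\<integral>zs. (\<Prod>j\<in>I. ?H j (zs j)) \<partial>Qn I) = (\<Prod>j\<in>I. integral\<^sup>L QQ (?H j))"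
    by (rule product_integral_prod[OF I(1) intH])
  also have "\<dots> = integral\<^sup>L QQ (?H i) * (\<Prod>j\<in>I-{i}. integral\<^sup>L QQ (?H j))"
    using I by (rule prod.remove)
  also have "(\<Prod>j\<in>I-{i}. integral\<^sup>L QQ (?H j)) = (\<Prod>j\<in>I-{i}. LL t)"
    unfolding LL_def by (intro prod.cong) auto
  also have "\<dots> = LL t ^ (card I - 1)" using I by simp
  finally show "(\<integral>zs. g (zs i) * (\<Prod>j\<in>I-{i}. exp (- (t * w (zs j)))) \<partial>Qn I) = integral\<^sup>L QQ g * LL t ^ (card I - 1)"
    unfolding eq by simp
qed

definition "DD t = AA t * CC t - (BB t)\<^sup>2"

lemma FF_decomp:
  assumes I: "finite I" and t: "t \<ge> 0"
  shows "FF I (x, zs) t = (\<Sum>i\<in>I.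
      ((f x)\<^sup>2 * exp (- (t * w x))) * ((w (zs i) * exp (- (t * w (zs i)))) * (\<Prod>j\<in>I-{i}. exp (- (t * w (zs j)))))
    - (f x * exp (- (t * w x))) * ((w (zs i) * (f (zs i) * exp (- (t * w (zs i))))) * (\<Prod>j\<in>I-{i}. exp (- (t * w (zs j))))))"
proof -
  have eq: "- (t * (w x + SW I zs)) = - (t * w x) + (\<Sum>j\<in>I. - (t * w (zs j)))"
    unfolding SW_def by (simp add: sum_distrib_left sum_negf algebra_simps)
  have e: "exp (- (t * (w x + SW I zs))) = exp (- (t * w x)) * (\<Prod>j\<in>I. exp (- (t * w (zs j))))"
  proof -
    have "exp (- (t * (w x + SW I zs))) = exp (- (t * w x) + (\<Sum>j\<in>I. - (t * w (zs j))))"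
      by (simp only: eq)
    also have "\<dots> = exp (- (t * w x)) * exp (\<Sum>j\<in>I. - (t * w (zs j)))" by (rule exp_add)
    also have "exp (\<Sum>j\<in>I. - (t * w (zs j))) = (\<Prod>j\<in>I. exp (- (t * w (zs j))))" by (rule exp_sum[OF I])
    finally show ?thesis .
  qed
  have pr: "(\<Prod>j\<in>I. exp (- (t * w (zs j)))) = exp (- (t * w (zs i))) * (\<Prod>j\<in>I-{i}. exp (- (t * w (zs j))))"
    if "i \<in> I" for i using I that by (rule prod.remove)
  have "FF I (x, zs) t = (\<Sum>i\<in>I. f x * (w (zs i) * (f x - f (zs i))) * (exp (- (t * w x)) * (\<Prod>j\<in>I. exp (- (t * w (zs j))))))"
    unfolding FF_def using t by (simp add: e sum_distrib_left sum_distrib_right)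
  also have "\<dots> = (\<Sum>i\<in>I.
      ((f x)\<^sup>2 * exp (- (t * w x))) * ((w (zs i) * exp (- (t * w (zs i)))) * (\<Prod>j\<in>I-{i}. exp (- (t * w (zs j)))))
    - (f x * exp (- (t * w x))) * ((w (zs i) * (f (zs i) * exp (- (t * w (zs i))))) * (\<Prod>j\<in>I-{i}. exp (- (t * w (zs j))))))"
    by (intro sum.cong refl) (simp add: pr power2_eq_square algebra_simps)
  finally show ?thesis .
qed

lemma int_g1: "t \<ge> 0 \<Longrightarrow> integrable QQ (\<lambda>z. w z * exp (- (t * w z)))"
  using integrable_QQ_w[of "\<lambda>z. exp (- (t * w z))"] int_e1 by simp
lemma val_g1: "t \<ge> 0 \<Longrightarrow> (\<integral>z. w z * exp (- (t * w z)) \<partial>QQ) = CC t"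
  using integral_QQ_w[of "\<lambda>z. exp (- (t * w z))"] unfolding CC_def by simp
lemma int_g2: "t \<ge> 0 \<Longrightarrow> integrable QQ (\<lambda>z. w z * (f z * exp (- (t * w z))))"
  using integrable_QQ_w[of "\<lambda>z. f z * exp (- (t * w z))"] int_e2 by simp
lemma val_g2: "t \<ge> 0 \<Longrightarrow> (\<integral>z. w z * (f z * exp (- (t * w z))) \<partial>QQ) = BB t"
  using integral_QQ_w[of "\<lambda>z. f z * exp (- (t * w z))"] unfolding BB_def by simp

lemma FF_MP:
  assumes I: "finite I" and t: "t \<ge> 0"
  shows "(\<integral>xz. FF I xz t \<partial>(PI \<Otimes>\<^sub>M Qn I)) = real (card I) * DD t * LL t ^ (card I - 1)"
proof -
  interpret PQ: pair_sigma_finite PI "Qn I" by (rule pair_PQ)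
  let ?P = "\<lambda>i zs. (\<Prod>j\<in>I-{i}. exp (- (t * w (zs j))))"
  let ?a1 = "\<lambda>x. (f x)\<^sup>2 * exp (- (t * w x))"
  let ?a2 = "\<lambda>x. f x * exp (- (t * w x))"
  let ?k1 = "\<lambda>i zs. (w (zs i) * exp (- (t * w (zs i)))) * ?P i zs"
  let ?k2 = "\<lambda>i zs. (w (zs i) * (f (zs i) * exp (- (t * w (zs i))))) * ?P i zs"
  have k1: "integrable (Qn I) (?k1 i)" "integral\<^sup>L (Qn I) (?k1 i) = CC t * LL t ^ (card I - 1)" if "i \<in> I" for i
    using Kprod[OF I that int_g1[OF t] t] val_g1[OF t] by auto
  have k2: "integrable (Qn I) (?k2 i)" "integral\<^sup>L (Qn I) (?k2 i) = BB t * LL t ^ (card I - 1)" if "i \<in> I" for i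
    using Kprod[OF I that int_g2[OF t] t] val_g2[OF t] by auto
  have i1: "integrable (PI \<Otimes>\<^sub>M Qn I) (\<lambda>z. ?a1 (fst z) * ?k1 i (snd z))"
   and v1: "(\<integral>z. ?a1 (fst z) * ?k1 i (snd z) \<partial>(PI \<Otimes>\<^sub>M Qn I)) = AA t * (CC t * LL t ^ (card I - 1))"
    if "i \<in> I" for i
    using PQ.integrable_mult_pair[OF int_e3[OF t] k1(1)[OF that]] k1(2)[OF that] unfolding AA_def by auto
  have i2: "integrable (PI \<Otimes>\<^sub>M Qn I) (\<lambda>z. ?a2 (fst z) * ?k2 i (snd z))"
   and v2: "(\<integral>z. ?a2 (fst z) * ?k2 i (snd z) \<partial>(PI \<Otimes>\<^sub>M Qn I)) = BB t * (BB t * LL t ^ (card I - 1))"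
    if "i \<in> I" for i
    using PQ.integrable_mult_pair[OF int_e2[OF t] k2(1)[OF that]] k2(2)[OF that] unfolding BB_def by auto
  have "(\<integral>xz. FF I xz t \<partial>(PI \<Otimes>\<^sub>M Qn I))
      = (\<integral>z. (\<Sum>i\<in>I. ?a1 (fst z) * ?k1 i (snd z) - ?a2 (fst z) * ?k2 i (snd z)) \<partial>(PI \<Otimes>\<^sub>M Qn I))"
    using FF_decomp[OF I t] by (intro Bochner_Integration.integral_cong refl) (metis prod.collapse)
  also have "\<dots> = (\<Sum>i\<in>I. (\<integral>z. ?a1 (fst z) * ?k1 i (snd z) \<partial>(PI \<Otimes>\<^sub>M Qn I)) - (\<integral>z. ?a2 (fst z) * ?k2 i (snd z) \<partial>(PI \<Otimes>\<^sub>M Qn I)))"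
    using i1 i2 by (subst Bochner_Integration.integral_sum) (auto intro!: sum.cong)
  also have "\<dots> = (\<Sum>i\<in>I. AA t * (CC t * LL t ^ (card I - 1)) - BB t * (BB t * LL t ^ (card I - 1)))"
    using v1 v2 by (intro sum.cong) auto
  also have "\<dots> = real (card I) * DD t * LL t ^ (card I - 1)"
    unfolding DD_def by (simp add: power2_eq_square algebra_simps)
  finally show ?thesis .
qed

lemma TT_eq2:
  assumes I: "finite I"
  shows "TT I = (\<integral>t. indicator {0..} t * (real (card I) * DD t * LL t ^ (card I - 1)) \<partial>lborel)"
    and "integrable lborel (\<lambda>t. indicator {0..} t * (real (card I) * DD t * LL t ^ (card I - 1)))"
proof -
  interpret PL: pair_sigma_finite "PI \<Otimes>\<^sub>M Qn I" lborel by (rule pair_MPL)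
  have int: "integrable ((PI \<Otimes>\<^sub>M Qn I) \<Otimes>\<^sub>M lborel) (case_prod (FF I))"
    using FF_int[OF I] by (simp add: split_beta')
  have eqt: "(\<integral>xz. FF I xz t \<partial>(PI \<Otimes>\<^sub>M Qn I)) = indicator {0..} t * (real (card I) * DD t * LL t ^ (card I - 1))" for t
  proof (cases "t \<ge> 0")
    case True then show ?thesis using FF_MP[OF I True] by simp
  next
    case False then show ?thesis unfolding FF_def by simp
  qed
  have "TT I = (\<integral>t. (\<integral>xz. FF I xz t \<partial>(PI \<Otimes>\<^sub>M Qn I)) \<partial>lborel)"
    unfolding TT_def using PL.integral_snd[OF int] by (simp add: split_beta')
  then show "TT I = (\<integral>t. indicator {0..} t * (real (card I) * DD t * LL t ^ (card I - 1)) \<partial>lborel)"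
    unfolding eqt .
  show "integrable lborel (\<lambda>t. indicator {0..} t * (real (card I) * DD t * LL t ^ (card I - 1)))"
    using PL.integrable_snd[OF int] unfolding eqt .
qed

lemma main_formula:
  assumes N: "N \<ge> 1"
  shows "pi_inner M p f (PN M p q N f) = F2 - (\<integral>t. indicator {0..} t * (real (N - 1) * DD t * LL t ^ (N - 2)) \<partial>lborel)"
    and "integrable lborel (\<lambda>t. indicator {0..} t * (real (N - 1) * DD t * LL t ^ (N - 2)))"
proof -
  let ?I = "{2..N}"
  have I: "finite ?I" by simp
  have cI: "card ?I = N - 1" by simp
  have cI1: "N - 1 - 1 = N - 2" by simp
  have "pi_inner M p f (PN M p q N f) = (\<integral>x. f x * (\<integral>zs. Rf ?I x zs \<partial>Qn ?I) \<partial>PI)"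
    unfolding pi_inner_def using PN_eq[OF N] by simp
  also have "\<dots> = (\<integral>x. (f x)\<^sup>2 - f x * (f x - (\<integral>zs. Rf ?I x zs \<partial>Qn ?I)) \<partial>PI)"
    by (intro Bochner_Integration.integral_cong refl) (simp add: power2_eq_square algebra_simps)
  also have "\<dots> = F2 - TT ?I"
    unfolding TT_eq1(2)[OF I] F2_def using f_sq TT_eq1(1)[OF I] by simp
  finally show "pi_inner M p f (PN M p q N f) = F2 - (\<integral>t. indicator {0..} t * (real (N - 1) * DD t * LL t ^ (N - 2)) \<partial>lborel)"
    unfolding TT_eq2(1)[OF I] cI cI1 .
  show "integrable lborel (\<lambda>t. indicator {0..} t * (real (N - 1) * DD t * LL t ^ (N - 2)))"
    using TT_eq2(2)[OF I] unfolding cI cI1 .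
qed

lemma LL_prod:
  assumes I: "finite I" and T: "T \<ge> 0"
  shows "integrable (Qn I) (\<lambda>zs. \<Prod>j\<in>I. exp (- (T * w (zs j))))"
    and "(\<integral>zs. (\<Prod>j\<in>I. exp (- (T * w (zs j)))) \<partial>Qn I) = LL T ^ card I"
proof -
  interpret product_prob_space "\<lambda>_. QQ" I by (rule prod_QQ)
  show "integrable (Qn I) (\<lambda>zs. \<Prod>j\<in>I. exp (- (T * w (zs j))))"
    using product_integrable_prod[OF I, of "\<lambda>_ z. exp (- (T * w z))"] int_eQ[OF T] by simp
  have "(\<integral>zs. (\<Prod>j\<in>I. exp (- (T * w (zs j)))) \<partial>Qn I) = (\<Prod>j\<in>I. LL T)"
    unfolding LL_def using product_integral_prod[OF I, of "\<lambda>_ z. exp (- (T * w z))"] int_eQ[OF T] by simp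
  then show "(\<integral>zs. (\<Prod>j\<in>I. exp (- (T * w (zs j)))) \<partial>Qn I) = LL T ^ card I" by simp
qed

lemma d_formula:
  assumes T: "T \<ge> 0"
  shows "integrable lborel (\<lambda>t. indicator {0..T} t * (real n * CC t * LL t ^ (n - 1)))"
    and "(\<integral>t. indicator {0..T} t * (real n * CC t * LL t ^ (n - 1)) \<partial>lborel) = 1 - LL T ^ n"
proof -
  let ?I = "{..<n}"
  have I: "finite ?I" by simp
  interpret QL: pair_sigma_finite "Qn ?I" lborel
    by (intro pair_sigma_finite.intro prob_space_imp_sigma_finite prob_Qn lborel.sigma_finite_measure_axioms)
  interpret Qp: prob_space "Qn ?I" by (rule prob_Qn)
  define G where "G = (\<lambda>zs t. indicator {0..T} t * (SW ?I zs * exp (- (t * SW ?I zs))))"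
  have SWn: "SW ?I zs \<ge> 0" if "zs \<in> space (Qn ?I)" for zs using SW_nn[of ?I zs] space_Qn[OF that] by simp
  have Gm[measurable]: "case_prod G \<in> borel_measurable (Qn ?I \<Otimes>\<^sub>M lborel)"
    unfolding G_def SW_def by measurable
  have Gt: "integrable lborel (G zs)" "(\<integral>t. G zs t \<partial>lborel) = 1 - exp (- (T * SW ?I zs))"
    if "zs \<in> space (Qn ?I)" for zs
    unfolding G_def using exp_FTC[OF SWn[OF that] T] by auto
  have Gint: "integrable (Qn ?I \<Otimes>\<^sub>M lborel) (case_prod G)"
  proof (rule QL.Fubini_integrable)
    show "case_prod G \<in> borel_measurable (Qn ?I \<Otimes>\<^sub>M lborel)" by (rule Gm)
    have eqn: "(\<integral>t. norm (case_prod G (zs, t)) \<partial>lborel) = 1 - exp (- (T * SW ?I zs))"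
      if "zs \<in> space (Qn ?I)" for zs
    proof -
      have "(\<lambda>t. norm (case_prod G (zs, t))) = G zs"
        using SWn[OF that] unfolding G_def by (auto simp: fun_eq_iff abs_mult indicator_def)
      then show ?thesis using Gt[OF that] by simp
    qed
    have bi: "integrable (Qn ?I) (\<lambda>zs. 1 - exp (- (T * SW ?I zs)))"
    proof (rule Bochner_Integration.integrable_bound[of _ "\<lambda>_. 1::real"])
      show "integrable (Qn ?I) (\<lambda>_. 1::real)" by simp
      show "(\<lambda>zs. 1 - exp (- (T * SW ?I zs))) \<in> borel_measurable (Qn ?I)" unfolding SW_def by measurable
      show "AE zs in Qn ?I. norm (1 - exp (- (T * SW ?I zs))) \<le> norm (1::real)"
      proof (rule AE_I2)
        fix zs assume "zs \<in> space (Qn ?I)"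
        then have "0 \<le> T * SW ?I zs" using SWn T by simp
        then show "norm (1 - exp (- (T * SW ?I zs))) \<le> norm (1::real)" by simp
      qed
    qed
    show "integrable (Qn ?I) (\<lambda>zs. \<integral>t. norm (case_prod G (zs, t)) \<partial>lborel)"
      using bi
    proof (rule Bochner_Integration.integrable_cong[OF refl, THEN iffD1, rotated])
      fix zs assume zs: "zs \<in> space (Qn ?I)"
      show "1 - exp (- (T * SW ?I zs)) = (\<integral>t. norm (case_prod G (zs, t)) \<partial>lborel)"
        using eqn[OF zs] by simp
    qed
    show "AE zs in Qn ?I. integrable lborel (\<lambda>t. case_prod G (zs, t))"
      using Gt(1) by (intro AE_I2) simp
  qed
  have k1: "integrable (Qn ?I) (\<lambda>zs. (w (zs i) * exp (- (t * w (zs i)))) * (\<Prod>j\<in>?I-{i}. exp (- (t * w (zs j)))))"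
     "(\<integral>zs. (w (zs i) * exp (- (t * w (zs i)))) * (\<Prod>j\<in>?I-{i}. exp (- (t * w (zs j)))) \<partial>Qn ?I) = CC t * LL t ^ (n - 1)"
    if "i \<in> ?I" "t \<ge> 0" for i t
    using Kprod[OF I that(1) int_g1[OF that(2)] that(2)] val_g1[OF that(2)] by auto
  have Gsum: "G zs t = indicator {0..T} t * (\<Sum>i\<in>?I. (w (zs i) * exp (- (t * w (zs i)))) * (\<Prod>j\<in>?I-{i}. exp (- (t * w (zs j)))))"
    for zs t
  proof -
    have "exp (- (t * SW ?I zs)) = exp (\<Sum>j\<in>?I. - (t * w (zs j)))"
      unfolding SW_def by (simp add: sum_distrib_left sum_negf)
    also have "\<dots> = (\<Prod>j\<in>?I. exp (- (t * w (zs j))))" by (rule exp_sum[OF I])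
    finally have e: "exp (- (t * SW ?I zs)) = (\<Prod>j\<in>?I. exp (- (t * w (zs j))))" .
    have pr: "(\<Prod>j\<in>?I. exp (- (t * w (zs j)))) = exp (- (t * w (zs i))) * (\<Prod>j\<in>?I-{i}. exp (- (t * w (zs j))))"
      if "i \<in> ?I" for i using I that by (rule prod.remove)
    have "SW ?I zs * exp (- (t * SW ?I zs)) = SW ?I zs * (\<Prod>j\<in>?I. exp (- (t * w (zs j))))"
      by (simp only: e)
    also have "\<dots> = (\<Sum>i\<in>?I. w (zs i) * (\<Prod>j\<in>?I. exp (- (t * w (zs j)))))"
      unfolding SW_def by (rule sum_distrib_right)
    also have "\<dots> = (\<Sum>i\<in>?I. (w (zs i) * exp (- (t * w (zs i)))) * (\<Prod>j\<in>?I-{i}. exp (- (t * w (zs j)))))"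
      by (intro sum.cong refl) (simp add: pr)
    finally show ?thesis unfolding G_def by simp
  qed
  have inner: "(\<integral>zs. G zs t \<partial>Qn ?I) = indicator {0..T} t * (real n * CC t * LL t ^ (n - 1))" for t
  proof (cases "t \<in> {0..T}")
    case True
    then have t: "t \<ge> 0" by simp
    have "(\<integral>zs. G zs t \<partial>Qn ?I) = (\<integral>zs. (\<Sum>i\<in>?I. (w (zs i) * exp (- (t * w (zs i)))) * (\<Prod>j\<in>?I-{i}. exp (- (t * w (zs j))))) \<partial>Qn ?I)"
      unfolding Gsum using True by simp
    also have "\<dots> = (\<Sum>i\<in>?I. CC t * LL t ^ (n - 1))"
      using k1[OF _ t] by (subst Bochner_Integration.integral_sum) auto
    finally show ?thesis using True by simp
  next
    case False then show ?thesis unfolding G_def by simp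
  qed
  have "(\<integral>t. (\<integral>zs. G zs t \<partial>Qn ?I) \<partial>lborel) = integral\<^sup>L (Qn ?I \<Otimes>\<^sub>M lborel) (case_prod G)"
    by (rule QL.integral_snd[OF Gint])
  also have "\<dots> = (\<integral>zs. (\<integral>t. G zs t \<partial>lborel) \<partial>Qn ?I)"
    using QL.integral_fst'[OF Gint] by (simp add: split_beta')
  also have "\<dots> = (\<integral>zs. 1 - (\<Prod>j\<in>?I. exp (- (T * w (zs j)))) \<partial>Qn ?I)"
  proof (rule Bochner_Integration.integral_cong[OF refl])
    fix zs assume zs: "zs \<in> space (Qn ?I)"
    have "exp (- (T * SW ?I zs)) = exp (\<Sum>j\<in>?I. - (T * w (zs j)))"
      unfolding SW_def by (simp add: sum_distrib_left sum_negf)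
    also have "\<dots> = (\<Prod>j\<in>?I. exp (- (T * w (zs j))))" by (rule exp_sum[OF I])
    finally show "(\<integral>t. G zs t \<partial>lborel) = 1 - (\<Prod>j\<in>?I. exp (- (T * w (zs j))))" using Gt(2)[OF zs] by simp
  qed
  also have "\<dots> = 1 - LL T ^ n"
    using LL_prod[OF I T] by (simp add: Qp.prob_space)
  finally show "(\<integral>t. indicator {0..T} t * (real n * CC t * LL t ^ (n - 1)) \<partial>lborel) = 1 - LL T ^ n"
    unfolding inner .
  show "integrable lborel (\<lambda>t. indicator {0..T} t * (real n * CC t * LL t ^ (n - 1)))"
    using QL.integrable_snd[OF Gint] unfolding inner .
qed

lemma sf_PI: "sigma_finite_measure PI" by (rule prob_space_imp_sigma_finite[OF prob_PI])
lemma sf_QQ: "sigma_finite_measure QQ" by (rule prob_space_imp_sigma_finite[OF prob_QQ])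

lemma AA_meas[measurable]: "AA \<in> borel_measurable borel"
  unfolding AA_def[abs_def] by (rule sigma_finite_measure.borel_measurable_lebesgue_integral[OF sf_PI]) measurable
lemma BB_meas[measurable]: "BB \<in> borel_measurable borel"
  unfolding BB_def[abs_def] by (rule sigma_finite_measure.borel_measurable_lebesgue_integral[OF sf_PI]) measurable
lemma CC_meas[measurable]: "CC \<in> borel_measurable borel"
  unfolding CC_def[abs_def] by (rule sigma_finite_measure.borel_measurable_lebesgue_integral[OF sf_PI]) measurable
lemma LL_meas[measurable]: "LL \<in> borel_measurable borel"
  unfolding LL_def[abs_def] by (rule sigma_finite_measure.borel_measurable_lebesgue_integral[OF sf_QQ]) measurable
lemma rho_meas[measurable]: "rho \<in> borel_measurable borel"
  unfolding rho_def[abs_def] by measurable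

lemma DD_rho: "t \<ge> 0 \<Longrightarrow> DD t = CC t * rho t"
  using CC_pos[of t] unfolding DD_def rho_def by (simp add: field_simps)

definition "kk n t = real n * CC t * LL t ^ (n - 1)"

lemma kk_nn: "t \<ge> 0 \<Longrightarrow> kk n t \<ge> 0"
  unfolding kk_def using CC_pos[of t] LL_pos[of t] by simp

lemma kk_meas[measurable]: "kk n \<in> borel_measurable borel"
  unfolding kk_def[abs_def] by measurable

definition "GG n y = (\<integral>\<^sup>+t. ennreal (if 0 \<le> t \<and> 0 < y \<and> y < rho t then kk n t else 0) \<partial>lborel)"

lemma exists_T:
  assumes y: "y > 0"
  shows "\<exists>T\<ge>0. {0..<T} \<subseteq> {t. 0 \<le> t \<and> y < rho t} \<and> {t. 0 \<le> t \<and> y < rho t} \<subseteq> {0..T}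
     \<and> (y < rho 1 \<longrightarrow> T \<ge> 1) \<and> (VV \<le> y \<longrightarrow> T = 0)"
proof -
  let ?U = "{t. 0 \<le> t \<and> y < rho t}"
  obtain t0 where t0: "t0 \<ge> 0" "rho t0 \<le> y" using rho_small[OF y] by auto
  have bnd: "t < t0" if "t \<in> ?U" for t
  proof (rule ccontr)
    assume "\<not> t < t0"
    then have "rho t \<le> rho t0" using rho_mono[of t0 t] t0 by simp
    then show False using that t0 by simp
  qed
  have down: "s \<in> ?U" if "0 \<le> s" "s \<le> t" "t \<in> ?U" for s t
    using rho_mono[of s t] that by auto
  show ?thesis
  proof (cases "?U = {}")
    case True
    have "VV \<le> y \<longrightarrow> (0::real) = 0" by simp
    moreover have "\<not> y < rho 1" using True by auto
    ultimately show ?thesis using True by (intro exI[of _ 0]) auto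
  next
    case False
    let ?T = "Sup ?U"
    have bdd: "bdd_above ?U" using bnd by (intro bdd_aboveI[of _ t0]) (auto intro: less_imp_le)
    have up: "t \<le> ?T" if "t \<in> ?U" for t using cSup_upper[OF that bdd] .
    obtain t1 where t1: "t1 \<in> ?U" using False by auto
    have T0: "?T \<ge> 0" using up[OF t1] t1 by simp
    have s1: "{0..<?T} \<subseteq> ?U"
    proof
      fix s assume s: "s \<in> {0..<?T}"
      then obtain t where "t \<in> ?U" "s < t" using less_cSup_iff[OF False bdd] by auto
      then show "s \<in> ?U" using down[of s t] s by auto
    qed
    have s2: "?U \<subseteq> {0..?T}" using up by auto
    have c1: "y < rho 1 \<longrightarrow> ?T \<ge> 1" using up[of 1] by auto
    have c2: "VV \<le> y \<longrightarrow> ?T = 0"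
    proof
      assume "VV \<le> y"
      then have "?U = {}" using rho_le_VV by (auto simp: not_less) (meson not_le order_trans)
      then show "?T = 0" using False by simp
    qed
    show ?thesis using T0 s1 s2 c1 c2 by blast
  qed
qed

lemma GG_meas[measurable]: "GG n \<in> borel_measurable borel"
proof -
  have "(\<lambda>y. \<integral>\<^sup>+t. ennreal (if 0 \<le> t \<and> 0 < y \<and> y < rho t then kk n t else 0) \<partial>lborel) \<in> borel_measurable lborel"
    by (rule lborel.borel_measurable_nn_integral) measurable
  then show ?thesis unfolding GG_def[abs_def] by simp
qed

lemma GG_T:
  assumes y: "y > 0"
  shows "\<exists>T\<ge>0. (\<forall>n. GG n y = ennreal (1 - LL T ^ n)) \<and> (y < rho 1 \<longrightarrow> T \<ge> 1) \<and> (VV \<le> y \<longrightarrow> T = 0)"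
proof -
  obtain T where T: "T \<ge> 0" "{0..<T} \<subseteq> {t. 0 \<le> t \<and> y < rho t}" "{t. 0 \<le> t \<and> y < rho t} \<subseteq> {0..T}"
    "y < rho 1 \<longrightarrow> T \<ge> 1" "VV \<le> y \<longrightarrow> T = 0"
    using exists_T[OF y] by blast
  have "GG n y = ennreal (1 - LL T ^ n)" for n
  proof -
    have "GG n y = (\<integral>\<^sup>+t. ennreal (indicator {0..T} t * kk n t) \<partial>lborel)"
      unfolding GG_def
    proof (rule nn_integral_cong_AE)
      show "AE t in lborel. ennreal (if 0 \<le> t \<and> 0 < y \<and> y < rho t then kk n t else 0) = ennreal (indicator {0..T} t * kk n t)"
        using AE_lborel_singleton[of T]
      proof eventually_elim
        fix t :: real assume tT: "t \<noteq> T"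
        show "ennreal (if 0 \<le> t \<and> 0 < y \<and> y < rho t then kk n t else 0) = ennreal (indicator {0..T} t * kk n t)"
        proof (cases "0 \<le> t \<and> t < T")
          case True
          then have "t \<in> {t. 0 \<le> t \<and> y < rho t}" using T(2) by auto
          then show ?thesis using True y by simp
        next
          case False
          then have "t \<notin> {0..T}" using tT by auto
          then have "\<not> (0 \<le> t \<and> y < rho t)" using T(3) by auto
          then show ?thesis using \<open>t \<notin> {0..T}\<close> by auto
        qed
      qed
    qed
    also have "\<dots> = ennreal (\<integral>t. indicator {0..T} t * kk n t \<partial>lborel)"
      using d_formula(1)[OF T(1), of n] kk_nn unfolding kk_def
      by (intro nn_integral_eq_integral) (auto simp: indicator_def)
    also have "\<dots> = ennreal (1 - LL T ^ n)" using d_formula(2)[OF T(1), of n] unfolding kk_def by simp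
    finally show ?thesis .
  qed
  then show ?thesis using T by blast
qed

definition "uu y = 1 - enn2real (GG 1 y)"

lemma uu_meas[measurable]: "uu \<in> borel_measurable borel"
  unfolding uu_def[abs_def] by measurable

lemma uu_T:
  assumes y: "y > 0"
  shows "\<exists>T\<ge>0. uu y = LL T \<and> (\<forall>n. GG n y = ennreal (1 - uu y ^ n)) \<and> (y < rho 1 \<longrightarrow> T \<ge> 1) \<and> (VV \<le> y \<longrightarrow> T = 0)"
proof -
  obtain T where T: "T \<ge> 0" "\<forall>n. GG n y = ennreal (1 - LL T ^ n)" "y < rho 1 \<longrightarrow> T \<ge> 1" "VV \<le> y \<longrightarrow> T = 0"
    using GG_T[OF y] by blast
  have "1 - LL T \<ge> 0" using LL_le1[OF T(1)] by simp
  then have "uu y = LL T" unfolding uu_def using T(2) by simp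
  then show ?thesis using T by auto
qed

lemma uu_pos: "y > 0 \<Longrightarrow> uu y > 0"
  using uu_T LL_pos by force
lemma uu_le1: "y > 0 \<Longrightarrow> uu y \<le> 1"
  using uu_T LL_le1 by force
lemma uu_less1: "y > 0 \<Longrightarrow> y < rho 1 \<Longrightarrow> uu y < 1"
proof -
  assume y: "y > 0" "y < rho 1"
  then obtain T where "uu y = LL T" "T \<ge> 1" using uu_T by blast
  then show ?thesis using LL_less1[of T] by simp
qed
lemma uu_VV: "y > 0 \<Longrightarrow> VV \<le> y \<Longrightarrow> uu y = 1"
  using uu_T LL0 by force
lemma GG_uu: "y > 0 \<Longrightarrow> GG n y = ennreal (1 - uu y ^ n)"
  using uu_T by blast

lemma DD_nn: "t \<ge> 0 \<Longrightarrow> DD t \<ge> 0"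
  using DD_rho[of t] CC_pos[of t] rho_nn[of t] by simp

lemma int_ind_V: "integrable lborel (\<lambda>y. indicator {0<..<VV} y :: real)"
proof -
  have "0 \<le> VV" using rho_nn[of 0] rho0 by simp
  then show ?thesis by (subst integrable_indicator_iff) auto
qed

lemma H_eq:
  shows "(\<integral>t. indicator {0..} t * (real n * DD t * LL t ^ (n - 1)) \<partial>lborel)
       = (\<integral>y. indicator {0<..<VV} y * (1 - uu y ^ n) \<partial>lborel)"
proof -
  let ?h = "\<lambda>t. indicator {0..} t * (real n * DD t * LL t ^ (n - 1)) :: real"
  have hint: "integrable lborel ?h"
    using main_formula(2)[of "n + 1"] by simp
  have hnn: "?h t \<ge> 0" for t
    using DD_nn[of t] LL_pos[of t] by (auto simp: indicator_def)
  have hm0: "?h \<in> borel_measurable borel" unfolding DD_def by measurable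
  have hm: "?h \<in> borel_measurable lborel" using hm0 by simp
  have "(\<integral>t. ?h t \<partial>lborel) = enn2real (\<integral>\<^sup>+t. ennreal (?h t) \<partial>lborel)"
    using hm hnn by (intro integral_eq_nn_integral) auto
  also have "(\<integral>\<^sup>+t. ennreal (?h t) \<partial>lborel)
      = (\<integral>\<^sup>+t. (\<integral>\<^sup>+y. ennreal (if 0 \<le> t \<and> 0 < y \<and> y < rho t then kk n t else 0) \<partial>lborel) \<partial>lborel)"
  proof (rule nn_integral_cong)
    fix t :: real
    show "ennreal (?h t) = (\<integral>\<^sup>+y. ennreal (if 0 \<le> t \<and> 0 < y \<and> y < rho t then kk n t else 0) \<partial>lborel)"
    proof (cases "t \<ge> 0")
      case True
      have "(\<integral>\<^sup>+y. ennreal (if 0 \<le> t \<and> 0 < y \<and> y < rho t then kk n t else 0) \<partial>lborel)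
          = (\<integral>\<^sup>+y. ennreal (kk n t) * indicator {0<..<rho t} y \<partial>lborel)"
        using True by (intro nn_integral_cong) (auto simp: indicator_def)
      also have "\<dots> = ennreal (kk n t) * emeasure lborel {0<..<rho t}"
        by (rule nn_integral_cmult_indicator) simp
      also have "\<dots> = ennreal (kk n t) * ennreal (rho t)"
        using rho_nn[OF True] by simp
      also have "\<dots> = ennreal (?h t)"
        using True kk_nn[OF True, of n] rho_nn[OF True] unfolding kk_def
        by (simp add: DD_rho ennreal_mult[symmetric] algebra_simps)
      finally show ?thesis by simp
    next
      case False then show ?thesis by simp
    qed
  qed
  also have "\<dots> = (\<integral>\<^sup>+y. (\<integral>\<^sup>+t. ennreal (if 0 \<le> t \<and> 0 < y \<and> y < rho t then kk n t else 0) \<partial>lborel) \<partial>lborel)"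
    by (rule lborel_pair.Fubini'[symmetric]) measurable
  also have "\<dots> = (\<integral>\<^sup>+y. GG n y \<partial>lborel)" unfolding GG_def ..
  also have "\<dots> = (\<integral>\<^sup>+y. ennreal (indicator {0<..<VV} y * (1 - uu y ^ n)) \<partial>lborel)"
  proof (rule nn_integral_cong)
    fix y :: real
    show "GG n y = ennreal (indicator {0<..<VV} y * (1 - uu y ^ n))"
    proof (cases "y > 0")
      case True
      show ?thesis
      proof (cases "y < VV")
        case True2: True
        then show ?thesis using GG_uu[OF True] True by simp
      next
        case False
        then show ?thesis using GG_uu[OF True] uu_VV[OF True] by simp
      qed
    next
      case False
      then show ?thesis unfolding GG_def by simp
    qed
  qed
  also have "\<dots> = ennreal (\<integral>y. indicator {0<..<VV} y * (1 - uu y ^ n) \<partial>lborel)"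
  proof (rule nn_integral_eq_integral)
    show "integrable lborel (\<lambda>y. indicator {0<..<VV} y * (1 - uu y ^ n))"
    proof (rule Bochner_Integration.integrable_bound[OF int_ind_V])
      have "(\<lambda>y. indicator {0<..<VV} y * (1 - uu y ^ n)) \<in> borel_measurable borel" by measurable
      then show "(\<lambda>y. indicator {0<..<VV} y * (1 - uu y ^ n)) \<in> borel_measurable lborel" by simp
      show "AE y in lborel. norm (indicator {0<..<VV} y * (1 - uu y ^ n)) \<le> norm (indicator {0<..<VV} y :: real)"
      proof (rule AE_I2)
        fix y :: real
        show "norm (indicator {0<..<VV} y * (1 - uu y ^ n)) \<le> norm (indicator {0<..<VV} y :: real)"
        proof (cases "y \<in> {0<..<VV}")
          case True
          then have "0 < uu y" "uu y \<le> 1" using uu_pos uu_le1 by auto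
          then have "0 \<le> 1 - uu y ^ n" "1 - uu y ^ n \<le> 1" by (auto simp: power_le_one)
          then show ?thesis using True by simp
        qed simp
      qed
    qed
    show "AE y in lborel. 0 \<le> indicator {0<..<VV} y * (1 - uu y ^ n)"
    proof (rule AE_I2)
      fix y :: real
      show "0 \<le> indicator {0<..<VV} y * (1 - uu y ^ n)"
      proof (cases "y \<in> {0<..<VV}")
        case True
        then have "0 < uu y" "uu y \<le> 1" using uu_pos uu_le1 by auto
        then show ?thesis using True by (auto simp: power_le_one)
      qed simp
    qed
  qed
  finally have fin: "(\<integral>t. ?h t \<partial>lborel) = enn2real (ennreal (\<integral>y. indicator {0<..<VV} y * (1 - uu y ^ n) \<partial>lborel))" .
  have "0 \<le> (\<integral>y. indicator {0<..<VV} y * (1 - uu y ^ n) \<partial>lborel)"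
  proof (rule integral_nonneg_AE, rule AE_I2)
    fix y :: real
    show "0 \<le> indicator {0<..<VV} y * (1 - uu y ^ n)"
    proof (cases "y \<in> {0<..<VV}")
      case True
      then have "0 < uu y" "uu y \<le> 1" using uu_pos uu_le1 by auto
      then show ?thesis using True by (auto simp: power_le_one)
    qed simp
  qed
  then show ?thesis using fin by simp
qed

lemma VV_nn: "VV \<ge> 0" using rho_nn[of 0] rho0 by simp

lemma AA0: "AA 0 = F2" unfolding AA_def F2_def by simp

lemma mean_sq: "F2 - VV = mean\<^sup>2"
  using VQ_eq[of 0 mean] AA0 BB0 CC0 unfolding VV_def by (simp add: power2_eq_square)

definition "bb n = (\<integral>y. indicator {0<..<VV} y * uu y ^ n \<partial>lborel)"

lemma uu_bounds: "y \<in> {0<..<VV} \<Longrightarrow> 0 < uu y \<and> uu y \<le> 1"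
  using uu_pos uu_le1 by auto

lemma bb_int: "integrable lborel (\<lambda>y. indicator {0<..<VV} y * uu y ^ n * c)"
proof (rule Bochner_Integration.integrable_bound[OF integrable_mult_right[OF int_ind_V, of "\<bar>c\<bar>"]])
  have "(\<lambda>y. indicator {0<..<VV} y * uu y ^ n * c) \<in> borel_measurable borel" by measurable
  then show "(\<lambda>y. indicator {0<..<VV} y * uu y ^ n * c) \<in> borel_measurable lborel" by simp
  show "AE y in lborel. norm (indicator {0<..<VV} y * uu y ^ n * c) \<le> norm (\<bar>c\<bar> * indicator {0<..<VV} y)"
  proof (rule AE_I2)
    fix y :: real
    show "norm (indicator {0<..<VV} y * uu y ^ n * c) \<le> norm (\<bar>c\<bar> * indicator {0<..<VV} y)"
    proof (cases "y \<in> {0<..<VV}")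
      case True
      then have "0 < uu y" "uu y \<le> 1" using uu_bounds by auto
      then have "uu y ^ n \<le> 1" "0 \<le> uu y ^ n" by (auto simp: power_le_one)
      then show ?thesis using True by (simp add: abs_mult mult_left_le_one_le)
    qed simp
  qed
qed

lemma bb_int1: "integrable lborel (\<lambda>y. indicator {0<..<VV} y * uu y ^ n)"
  using bb_int[of n 1] by simp

lemma a_formula:
  assumes N: "N \<ge> 1"
  shows "pi_inner M p f (PN M p q N f) = mean\<^sup>2 + bb (N - 1)"
proof -
  have e: "N - 1 - 1 = N - 2" by simp
  have "pi_inner M p f (PN M p q N f) = F2 - (\<integral>y. indicator {0<..<VV} y * (1 - uu y ^ (N - 1)) \<partial>lborel)"
    using main_formula(1)[OF N] H_eq[of "N - 1"] unfolding e by simp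
  also have "(\<integral>y. indicator {0<..<VV} y * (1 - uu y ^ (N - 1)) \<partial>lborel)
      = (\<integral>y. indicator {0<..<VV} y \<partial>lborel) - bb (N - 1)"
    unfolding bb_def using int_ind_V bb_int1[of "N - 1"]
    by (subst Bochner_Integration.integral_diff[symmetric]) (auto simp: algebra_simps)
  also have "(\<integral>y. indicator {0<..<VV} y \<partial>lborel) = VV" using VV_nn by simp
  finally show ?thesis using mean_sq by simp
qed

lemma bb_nn: "bb n \<ge> 0"
  unfolding bb_def
proof (rule integral_nonneg_AE, rule AE_I2)
  fix y :: real
  show "0 \<le> indicator {0<..<VV} y * uu y ^ n"
  proof (cases "y \<in> {0<..<VV}")
    case True then have "0 < uu y" using uu_bounds by auto
    then show ?thesis using True by simp
  qed simp
qed

lemma bb_dec: "bb (Suc n) \<le> bb n"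
  unfolding bb_def
proof (rule integral_mono[OF bb_int1 bb_int1])
  fix y :: real
  show "indicator {0<..<VV} y * uu y ^ Suc n \<le> indicator {0<..<VV} y * uu y ^ n"
  proof (cases "y \<in> {0<..<VV}")
    case True
    then have "0 < uu y" "uu y \<le> 1" using uu_bounds by auto
    then show ?thesis using True by (simp add: mult_left_le_one_le)
  qed simp
qed

lemma bb_conv: "bb (Suc n) - bb n \<le> bb (Suc (Suc n)) - bb (Suc n)"
proof -
  have "bb n - 2 * bb (Suc n) + bb (Suc (Suc n)) = (\<integral>y. indicator {0<..<VV} y * uu y ^ n * (1 - uu y)\<^sup>2 \<partial>lborel)"
  proof -
    have "(\<integral>y. indicator {0<..<VV} y * uu y ^ n * (1 - uu y)\<^sup>2 \<partial>lborel)
      = (\<integral>y. indicator {0<..<VV} y * uu y ^ n - 2 * (indicator {0<..<VV} y * uu y ^ Suc n) + indicator {0<..<VV} y * uu y ^ Suc (Suc n) \<partial>lborel)"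
      by (intro Bochner_Integration.integral_cong refl) (simp add: power2_eq_square algebra_simps)
    also have "\<dots> = bb n - 2 * bb (Suc n) + bb (Suc (Suc n))"
      unfolding bb_def using bb_int1 by (simp del: power_Suc)
    finally show ?thesis by simp
  qed
  moreover have "(\<integral>y. indicator {0<..<VV} y * uu y ^ n * (1 - uu y)\<^sup>2 \<partial>lborel) \<ge> 0"
  proof (rule integral_nonneg_AE, rule AE_I2)
    fix y :: real
    show "0 \<le> indicator {0<..<VV} y * uu y ^ n * (1 - uu y)\<^sup>2"
    proof (cases "y \<in> {0<..<VV}")
      case True then have "0 < uu y" using uu_bounds by auto
      then show ?thesis using True by simp
    qed simp
  qed
  ultimately show ?thesis by simp
qed

lemma bb_zero: "VV = 0 \<Longrightarrow> bb n = 0"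
  unfolding bb_def by simp

lemma bb_pos: "VV > 0 \<Longrightarrow> bb n > 0"
  unfolding bb_def
proof (rule integral_pos_Ioo[OF bb_int1])
  fix y :: real
  show "0 \<le> indicator {0<..<VV} y * uu y ^ n"
  proof (cases "y \<in> {0<..<VV}")
    case True then have "0 < uu y" using uu_bounds by auto
    then show ?thesis using True by simp
  qed simp
next
  assume "VV > 0" then show "VV > 0" .
next
  fix y :: real assume "0 < y" "y < VV"
  then show "0 < indicator {0<..<VV} y * uu y ^ n" using uu_bounds[of y] by simp
qed

lemma bb_sdec:
  assumes V: "VV > 0" shows "bb (Suc n) < bb n"
proof -
  have r1: "rho 1 > 0" using rho_pos1[OF V] .
  have "bb n - bb (Suc n) = (\<integral>y. indicator {0<..<VV} y * uu y ^ n * (1 - uu y) \<partial>lborel)"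
  proof -
    have "(\<integral>y. indicator {0<..<VV} y * uu y ^ n * (1 - uu y) \<partial>lborel)
      = (\<integral>y. indicator {0<..<VV} y * uu y ^ n - indicator {0<..<VV} y * uu y ^ Suc n \<partial>lborel)"
      by (intro Bochner_Integration.integral_cong refl) (simp add: algebra_simps)
    also have "\<dots> = bb n - bb (Suc n)"
      unfolding bb_def using bb_int1 by (simp del: power_Suc)
    finally show ?thesis by simp
  qed
  moreover have "(\<integral>y. indicator {0<..<VV} y * uu y ^ n * (1 - uu y) \<partial>lborel) > 0"
  proof (rule integral_pos_Ioo)
    show "integrable lborel (\<lambda>y. indicator {0<..<VV} y * uu y ^ n * (1 - uu y))"
      using bb_int1[of n] bb_int1[of "Suc n"] by (simp add: algebra_simps)
    fix y :: real
    show "0 \<le> indicator {0<..<VV} y * uu y ^ n * (1 - uu y)"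
    proof (cases "y \<in> {0<..<VV}")
      case True then have "0 < uu y" "uu y \<le> 1" using uu_bounds by auto
      then show ?thesis using True by simp
    qed simp
  next
    show "min VV (rho 1) > 0" using V r1 by simp
  next
    fix y :: real assume y: "0 < y" "y < min VV (rho 1)"
    then have "uu y < 1" using uu_less1 by simp
    then show "0 < indicator {0<..<VV} y * uu y ^ n * (1 - uu y)" using uu_bounds[of y] y by simp
  qed
  ultimately show ?thesis by simp
qed

definition "aseq N = pi_inner M p f (PN M p q N f)"

lemma aseq_eq: "N \<ge> 1 \<Longrightarrow> aseq N = mean\<^sup>2 + bb (N - 1)"
  unfolding aseq_def by (rule a_formula)

lemma aseq_cvx: "cvx_seq aseq"
proof
  fix n :: nat assume n: "n \<ge> 1"
  show "aseq (Suc n) \<le> aseq n" using aseq_eq[of n] aseq_eq[of "Suc n"] n bb_dec[of "n - 1"] by simp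
  show "aseq (Suc n) - aseq n \<le> aseq (Suc (Suc n)) - aseq (Suc n)"
    using aseq_eq[of n] aseq_eq[of "Suc n"] aseq_eq[of "Suc (Suc n)"] n bb_conv[of "n - 1"] by simp
qed

lemma int_fPN:
  assumes N: "N \<ge> 1"
  shows "integrable PI (\<lambda>x. f x * PN M p q N f x)"
proof -
  let ?I = "{2..N}"
  have "integrable PI (\<lambda>x. (f x)\<^sup>2 - f x * (f x - (\<integral>zs. Rf ?I x zs \<partial>Qn ?I)))"
    using f_sq TT_eq1(1)[of ?I] by simp
  then show ?thesis using PN_eq[OF N] by (simp add: power2_eq_square algebra_simps)
qed

lemma g_interp:
  assumes lam: "lam \<ge> 1"
  shows "pi_inner M p f (Plam M p q lam f) = interp aseq lam"
proof -
  let ?n = "nat \<lfloor>lam\<rfloor>"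
  let ?b = "real ?n + 1 - lam"
  have n1: "?n \<ge> 1" using floor_props[OF lam] by simp
  have "pi_inner M p f (Plam M p q lam f) = (\<integral>x. ?b * (f x * PN M p q ?n f x) + (1 - ?b) * (f x * PN M p q (?n + 1) f x) \<partial>PI)"
    unfolding pi_inner_def Plam_def Let_def by (intro Bochner_Integration.integral_cong refl) (simp add: algebra_simps)
  also have "\<dots> = ?b * aseq ?n + (1 - ?b) * aseq (?n + 1)"
    unfolding aseq_def pi_inner_def using int_fPN[OF n1] int_fPN[of "?n + 1"] by simp
  also have "\<dots> = interp aseq lam" unfolding interp_def Let_def ..
  finally show ?thesis .
qed

lemma aseq_nn: "N \<ge> 1 \<Longrightarrow> aseq N \<ge> 0"
  using aseq_eq bb_nn by (simp add: add_nonneg_nonneg)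

lemma interp_split:
  assumes lam: "lam \<ge> 1"
  shows "interp aseq lam = (real (nat \<lfloor>lam\<rfloor>) + 1 - lam) * aseq (nat \<lfloor>lam\<rfloor>) + (1 - (real (nat \<lfloor>lam\<rfloor>) + 1 - lam)) * aseq (nat \<lfloor>lam\<rfloor> + 1)"
    and "real (nat \<lfloor>lam\<rfloor>) + 1 - lam > 0" and "1 - (real (nat \<lfloor>lam\<rfloor>) + 1 - lam) \<ge> 0" and "nat \<lfloor>lam\<rfloor> \<ge> 1"
  using floor_props[OF lam] unfolding interp_def Let_def by auto

lemma interp_nn: "lam \<ge> 1 \<Longrightarrow> interp aseq lam \<ge> 0"
  using interp_split[of lam] aseq_nn[of "nat \<lfloor>lam\<rfloor>"] aseq_nn[of "nat \<lfloor>lam\<rfloor> + 1"]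
  by (simp add: add_nonneg_nonneg mult_nonneg_nonneg)

lemma interp_zero_iff:
  assumes lam: "lam \<ge> 1"
  shows "interp aseq lam = 0 \<longleftrightarrow> F2 = 0"
proof
  assume F: "F2 = 0"
  have "mean\<^sup>2 \<ge> 0" by simp
  then have V: "VV = 0" and m: "mean\<^sup>2 = 0" using mean_sq F VV_nn by linarith+
  have "aseq N = 0" if "N \<ge> 1" for N using aseq_eq[OF that] bb_zero[OF V] m by simp
  then show "interp aseq lam = 0" using interp_split[OF lam] by simp
next
  assume z: "interp aseq lam = 0"
  let ?n = "nat \<lfloor>lam\<rfloor>"
  let ?b = "real ?n + 1 - lam"
  have b: "?b > 0" "1 - ?b \<ge> 0" and n1: "?n \<ge> 1" using interp_split[OF lam] by auto
  have a1: "aseq ?n \<ge> 0" "aseq (?n + 1) \<ge> 0" using aseq_nn n1 by auto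
  have "?b * aseq ?n + (1 - ?b) * aseq (?n + 1) = 0" using z interp_split(1)[OF lam] by simp
  moreover have "?b * aseq ?n \<ge> 0" "(1 - ?b) * aseq (?n + 1) \<ge> 0" using b a1 by auto
  ultimately have "?b * aseq ?n = 0" by linarith
  then have "aseq ?n = 0" using b(1) by (metis mult_eq_0_iff order_less_irrefl)
  then have "mean\<^sup>2 + bb (?n - 1) = 0" using aseq_eq[OF n1] by simp
  moreover have "mean\<^sup>2 \<ge> 0" "bb (?n - 1) \<ge> 0" using bb_nn by auto
  ultimately have m: "mean\<^sup>2 = 0" and bz: "bb (?n - 1) = 0" by linarith+
  have "VV = 0" using bz bb_pos[of "?n - 1"] VV_nn by force
  then show "F2 = 0" using mean_sq m by simp
qed

lemma interp_1: "interp aseq 1 = aseq 1" unfolding interp_def by simp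
lemma interp_2: "interp aseq 2 = aseq 2" unfolding interp_def by simp

lemma strict_iff:
  "(\<forall>a b. 1 \<le> a \<longrightarrow> a < b \<longrightarrow> interp aseq b < interp aseq a) \<longleftrightarrow> VV > 0"
proof
  assume V: "VV > 0"
  interpret A: cvx_seq aseq by (rule aseq_cvx)
  have sd: "aseq (Suc n) < aseq n" if "n \<ge> 1" for n
    using aseq_eq[of n] aseq_eq[of "Suc n"] that bb_sdec[OF V, of "n - 1"] by simp
  show "\<forall>a b. 1 \<le> a \<longrightarrow> a < b \<longrightarrow> interp aseq b < interp aseq a"
    using A.interp_strict[OF sd] by blast
next
  assume st: "\<forall>a b. 1 \<le> a \<longrightarrow> a < b \<longrightarrow> interp aseq b < interp aseq a"
  show "VV > 0"
  proof (rule ccontr)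
    assume "\<not> VV > 0"
    then have V: "VV = 0" using VV_nn by simp
    have "aseq 2 = aseq 1" using aseq_eq[of 1] aseq_eq[of 2] bb_zero[OF V] by simp
    moreover have "interp aseq 2 < interp aseq 1" using st by auto
    ultimately show False using interp_1 interp_2 by simp
  qed
qed

lemma pi_norm_f: "pi_norm M p f = sqrt F2"
  unfolding pi_norm_def pi_inner_def F2_def by (simp add: power2_eq_square)

lemma pi_norm_fm: "pi_norm M p (\<lambda>x. f x - pi_mean M p f) = sqrt VV"
  unfolding pi_norm_def pi_inner_def VV_def VQ0 pi_mean_def mean_def by (simp add: power2_eq_square)

end
theorem theorem6p11:
  fixes M :: "'a measure" and p q f :: "'a \<Rightarrow> real"
  assumes "sigma_finite_measure M"
    and "p \<in> borel_measurable M" and "q \<in> borel_measurable M"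
    and "\<forall>x\<in>space M. 0 \<le> p x" and "\<forall>x\<in>space M. 0 \<le> q x"
    and "(\<integral>\<^sup>+x. ennreal (p x) \<partial>M) = 1" and "(\<integral>\<^sup>+x. ennreal (q x) \<partial>M) = 1"
    and "\<forall>x\<in>space M. p x > 0 \<longrightarrow> q x > 0"
    and "f \<in> borel_measurable M"
    and "integrable (density M (\<lambda>x. ennreal (p x))) (\<lambda>x. (f x)\<^sup>2)"
  defines "g \<equiv> (\<lambda>lam. pi_inner M p f (Plam M p q lam f))"
  shows "continuous_on {1..} g
    \<and> (\<forall>lam\<ge>1. 0 \<le> g lam)
    \<and> (\<forall>a b. 1 \<le> a \<longrightarrow> a \<le> b \<longrightarrow> g b \<le> g a)
    \<and> convex_on {1..} g
    \<and> (\<forall>lam\<ge>1. g lam = 0 \<longleftrightarrow> pi_norm M p f = 0)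
    \<and> ((\<forall>a b. 1 \<le> a \<longrightarrow> a < b \<longrightarrow> g b < g a)
        \<longleftrightarrow> pi_norm M p (\<lambda>x. f x - pi_mean M p f) > 0)"
proof -
  interpret isir M p q f
    by unfold_locales (use assms in auto)
  interpret A: cvx_seq aseq by (rule aseq_cvx)
  have geq: "g lam = interp aseq lam" if "lam \<ge> 1" for lam
    unfolding g_def using g_interp[OF that] .
  have c1: "continuous_on {1..} g"
    by (rule continuous_on_eq[OF A.interp_cont]) (simp add: geq)
  have c2: "\<forall>lam\<ge>1. 0 \<le> g lam" using interp_nn geq by auto
  have c3: "\<forall>a b. 1 \<le> a \<longrightarrow> a \<le> b \<longrightarrow> g b \<le> g a"
  proof (intro allI impI)
    fix a b :: real assume ab: "1 \<le> a" "a \<le> b"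
    then show "g b \<le> g a" using A.interp_mono[OF ab] geq[of a] geq[of b] by simp
  qed
  have c4: "convex_on {1..} g"
    by (rule convex_on_eq_on[OF A.interp_convex]) (auto simp: geq convex_real_interval)
  have c5: "\<forall>lam\<ge>1. g lam = 0 \<longleftrightarrow> pi_norm M p f = 0"
  proof (intro allI impI)
    fix lam :: real assume lam: "lam \<ge> 1"
    have "g lam = 0 \<longleftrightarrow> interp aseq lam = 0" using geq[OF lam] by simp
    also have "\<dots> \<longleftrightarrow> F2 = 0" by (rule interp_zero_iff[OF lam])
    also have "\<dots> \<longleftrightarrow> pi_norm M p f = 0" unfolding pi_norm_f by simp
    finally show "g lam = 0 \<longleftrightarrow> pi_norm M p f = 0" .
  qed
  have c6: "(\<forall>a b. 1 \<le> a \<longrightarrow> a < b \<longrightarrow> g b < g a) \<longleftrightarrow> pi_norm M p (\<lambda>x. f x - pi_mean M p f) > 0"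
  proof -
    have "(\<forall>a b. 1 \<le> a \<longrightarrow> a < b \<longrightarrow> g b < g a) \<longleftrightarrow> (\<forall>a b. 1 \<le> a \<longrightarrow> a < b \<longrightarrow> interp aseq b < interp aseq a)"
    proof (intro iffI allI impI)
      fix a b :: real assume H: "\<forall>a b. 1 \<le> a \<longrightarrow> a < b \<longrightarrow> g b < g a" and ab: "1 \<le> a" "a < b"
      then have "g b < g a" by blast
      then show "interp aseq b < interp aseq a" using geq[of a] geq[of b] ab by simp
    next
      fix a b :: real assume H: "\<forall>a b. 1 \<le> a \<longrightarrow> a < b \<longrightarrow> interp aseq b < interp aseq a" and ab: "1 \<le> a" "a < b"
      then have "interp aseq b < interp aseq a" by blast
      then show "g b < g a" using geq[of a] geq[of b] ab by simp
    qed
    also have "\<dots> \<longleftrightarrow> VV > 0" by (rule strict_iff)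
    also have "\<dots> \<longleftrightarrow> pi_norm M p (\<lambda>x. f x - pi_mean M p f) > 0" using pi_norm_fm by simp
    finally show ?thesis .
  qed
  show ?thesis using c1 c2 c3 c4 c5 c6 by blast
qed

end
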